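(* Let $N\ge3$ and consider the complete-graph ensemble ($z=N-1$) of spring networks on the circle described in the context. For every spring $e$ and every $\bar\ell\in(-1/2,1/2)$, $$\mathbb E(\Delta l_e\mid\bar l_e=\bar\ell)=\frac{N-2}{N}\bar\ell-\bar\ell=-\frac{2\bar\ell}{N},\qquad \operatorname{Var}(\Delta l_e\mid\bar l_e=\bar\ell)=\frac{N-2}{N^2}\big(|\bar\ell|-\bar\ell^2\big).$$ In particular the edge-averaged conditional variance $\operatorname{Var}(\Delta l\mid\bar l=\bar\ell)$ equals $\frac{N-2}{N^2}(|\bar\ell|-\bar\ell^2)$.
   Context: Let the circle be $\mathbb R/\mathbb Z$. Node positions $x_1,\dots,x_N$ are i.i.d. uniform on $\mathbb R/\mathbb Z$ and every pair of nodes is joined by exactly one spring ($N(N-1)/2$ springs, average degree $z=N-1$). A spring joining nodes $a<b$ is oriented from $a$ to $b$ with initial signed length $\bar l_e\in[-1/2,1/2)$, the representative of $x_b-x_a$ mod $1$ in $[-1/2,1/2)$; each is uniform on $[-1/2,1/2)$. With $\mathbf C$ a signed cycle matrix (fundamental cycles of a spanning tree, arbitrarily oriented; entries $\pm1$ for edges on a cycle with agreeing/opposite orientation, $0$ otherwise), the relaxed lengths are $\boldsymbol l^*=\mathbf C^T(\mathbf C\mathbf C^T)^{-1}\mathbf C\bar{\boldsymbol l}$, the minimizer of $\tfrac12\boldsymbol l^T\boldsymbol l$ subject to preserving all winding numbers $\mathbf C\boldsymbol l=\mathbf C\bar{\boldsymbol l}\in\mathbb Z^m$, and $\Delta\boldsymbol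 l=\boldsymbol l^*-\bar{\boldsymbol l}$. The edge-averaged conditional variance is $\operatorname{Var}(\Delta l_I\mid\bar l_I=\bar\ell)$ with $I$ uniform on the springs, independent of everything else. *)

theory Defs
  imports "HOL-Probability.Probability" "Jordan_Normal_Form.Gauss_Jordan_Elimination"
begin

text \<open>Enumeration of the springs: spring number k is edges N ! k, a pair (a,b) with a < b < N,
  oriented from a to b.\<close>
definition edges :: "nat \<Rightarrow> (nat \<times> nat) list" where
  "edges N = [(a, b). b \<leftarrow> [0..<N], a \<leftarrow> [0..<b]]"

definition nE :: "nat \<Rightarrow> nat" where
  "nE N = length (edges N)"

text \<open>A cycle in the complete graph on N nodes is given by a list of at least three distinct nodes,
  traversed cyclically (the traversal direction fixes its orientation).\<close>
definition is_cycle :: "nat \<Rightarrow> nat list \<Rightarrow> bool" where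
  "is_cycle N vs \<longleftrightarrow> distinct vs \<and> length vs \<ge> 3 \<and> set vs \<subseteq> {0..<N}"

definition cyc_sign :: "nat \<Rightarrow> nat list \<Rightarrow> nat \<Rightarrow> real" where
  "cyc_sign N vs k =
     (if \<exists>i<length vs. (vs ! i, vs ! ((i + 1) mod length vs)) = edges N ! k then 1
      else if \<exists>i<length vs. (vs ! ((i + 1) mod length vs), vs ! i) = edges N ! k then -1
      else 0)"

definition cyc_edges :: "nat \<Rightarrow> nat list \<Rightarrow> nat set" where
  "cyc_edges N vs = {k. k < nE N \<and> cyc_sign N vs k \<noteq> 0}"

definition tree_adj :: "nat \<Rightarrow> nat set \<Rightarrow> nat \<Rightarrow> nat \<Rightarrow> bool" where
  "tree_adj N T u v \<longleftrightarrow> (\<exists>k\<in>T. edges N ! k = (u, v) \<or> edges N ! k = (v, u))"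

definition spanning_tree :: "nat \<Rightarrow> nat set \<Rightarrow> bool" where
  "spanning_tree N T \<longleftrightarrow> T \<subseteq> {0..<nE N}
     \<and> (\<forall>u<N. \<forall>v<N. (tree_adj N T)\<^sup>*\<^sup>* u v)
     \<and> \<not> (\<exists>vs. is_cycle N vs \<and> cyc_edges N vs \<subseteq> T)"

text \<open>cyc assigns to every non-tree spring j its fundamental cycle (the cycle in T plus j),
  with an arbitrary orientation (encoded by the traversal direction of the node list).\<close>
definition fundamental_cycles :: "nat \<Rightarrow> nat set \<Rightarrow> (nat \<Rightarrow> nat list) \<Rightarrow> bool" where
  "fundamental_cycles N T cyc \<longleftrightarrow>
     (\<forall>j\<in>{0..<nE N} - T. is_cycle N (cyc j) \<and> j \<in> cyc_edges N (cyc j)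
                         \<and> cyc_edges N (cyc j) \<subseteq> T \<union> {j})"

definition nontree :: "nat \<Rightarrow> nat set \<Rightarrow> nat list" where
  "nontree N T = sorted_list_of_set ({0..<nE N} - T)"

definition cycle_mat :: "nat \<Rightarrow> nat set \<Rightarrow> (nat \<Rightarrow> nat list) \<Rightarrow> real mat" where
  "cycle_mat N T cyc =
     mat (length (nontree N T)) (nE N) (\<lambda>(i, k). cyc_sign N (cyc (nontree N T ! i)) k)"

text \<open>Representative of t mod 1 in [-1/2, 1/2).\<close>
definition crep :: "real \<Rightarrow> real" where
  "crep t = t - of_int \<lfloor>t + 1/2\<rfloor>"

text \<open>Initial signed lengths for node positions x (positions in [0,1) representing R/Z).\<close>
definition lbar :: "nat \<Rightarrow> (nat \<Rightarrow> real) \<Rightarrow> real vec" where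
  "lbar N x = vec (nE N) (\<lambda>k. crep (x (snd (edges N ! k)) - x (fst (edges N ! k))))"

definition lstar :: "nat \<Rightarrow> nat set \<Rightarrow> (nat \<Rightarrow> nat list) \<Rightarrow> (nat \<Rightarrow> real) \<Rightarrow> real vec" where
  "lstar N T cyc x =
     (let C = cycle_mat N T cyc
      in (transpose_mat C * the (mat_inverse (C * transpose_mat C)) * C) *\<^sub>v lbar N x)"

definition dl :: "nat \<Rightarrow> nat set \<Rightarrow> (nat \<Rightarrow> nat list) \<Rightarrow> (nat \<Rightarrow> real) \<Rightarrow> nat \<Rightarrow> real" where
  "dl N T cyc x k = lstar N T cyc x $ k - lbar N x $ k"

text \<open>Node positions i.i.d. uniform on R/Z, represented by [0,1).\<close>
definition pos_space :: "nat \<Rightarrow> (nat \<Rightarrow> real) measure" where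
  "pos_space N = PiM {0..<N} (\<lambda>_. uniform_measure lborel {0..<1})"

definition pos_edge_space :: "nat \<Rightarrow> ((nat \<Rightarrow> real) \<times> nat) measure" where
  "pos_edge_space N = pos_space N \<Otimes>\<^sub>M uniform_count_measure {0..<nE N}"

definition cond_var :: "'a measure \<Rightarrow> 'a measure \<Rightarrow> ('a \<Rightarrow> real) \<Rightarrow> 'a \<Rightarrow> real" where
  "cond_var M F X = real_cond_exp M F (\<lambda>\<omega>. (X \<omega> - real_cond_exp M F X \<omega>)\<^sup>2)"

end

theory Submission
  imports Defs "Jordan_Normal_Form.Determinant"
begin

definition UU :: "real measure" where "UU = uniform_measure lborel {0..<1}"

lemma UU_density: "UU = density lborel (\<lambda>x. ennreal (indicator {0..<1::real} x))"
  unfolding UU_def uniform_measure_def by (simp add: ennreal_indicator divide_ennreal_def)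

lemma prob_UU: "prob_space UU"
  unfolding UU_def by (rule prob_space_uniform_measure) auto

lemma space_UU[simp]: "space UU = UNIV" and sets_UU[simp]: "sets UU = sets borel"
  unfolding UU_def by auto

lemma meas_UU_iff: fixes f :: "real \<Rightarrow> real" shows "(f \<in> borel_measurable UU) = (f \<in> borel_measurable borel)"
proof -
  have "(borel_measurable UU :: (real \<Rightarrow> real) set) = borel_measurable borel" by (rule measurable_cong_sets) auto
  then show ?thesis by (simp only:)
qed

lemma crep_measurable[measurable]: "crep \<in> borel_measurable borel"
  unfolding crep_def by measurable

lemma crep_bounds: "-1/2 \<le> crep t" "crep t < 1/2"
  unfolding crep_def by linarith+

lemma UU_integral:
  fixes f :: "real \<Rightarrow> real"
  assumes f[measurable]: "f \<in> borel_measurable borel" and bnd: "\<And>x. \<bar>f x\<bar> \<le> K"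
  shows "integrable UU f" "integral\<^sup>L UU f = integral {0..1} f"
proof -
  interpret prob_space UU by (rule prob_UU)
  show i: "integrable UU f"
    by (rule integrable_const_bound[where B=K]) (auto simp: bnd meas_UU_iff)
  have i2: "integrable lborel (\<lambda>x. indicator {0..<1::real} x *\<^sub>R f x)"
    using i unfolding UU_density by (subst (asm) integrable_density) auto
  have "integral\<^sup>L UU f = (\<integral>x. indicator {0..<1::real} x *\<^sub>R f x \<partial>lborel)"
    unfolding UU_density by (subst integral_density) auto
  also have "\<dots> = (\<integral>x. indicator {0..1::real} x *\<^sub>R f x \<partial>lborel)"
    by (rule integral_cong_AE) (auto intro!: eventually_mono[OF AE_lborel_singleton[of 1]] simp: indicator_def)
  also have "\<dots> = integral {0..1} f"
  proof -
    have "set_integrable lborel {0..1::real} f"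
      unfolding set_integrable_def
      using i2 by (rule integrable_cong_AE_imp)
        (auto intro!: eventually_mono[OF AE_lborel_singleton[of 1]] simp: indicator_def)
    from set_borel_integral_eq_integral(2)[OF this] show ?thesis
      by (simp add: set_lebesgue_integral_def)
  qed
  finally show "integral\<^sup>L UU f = integral {0..1} f" .
qed

lemma lin_has_int:
  fixes a b al k :: real
  assumes "a \<le> b"
  shows "((\<lambda>y. al * y + k) has_integral (al * ((b\<^sup>2 - a\<^sup>2)/2) + k * (b - a))) {a..b}"
proof -
  have "((\<lambda>y. al * y) has_integral (al * ((b\<^sup>2 - a\<^sup>2)/2))) {a..b}"
    using has_integral_mult_right[OF ident_has_integral[OF assms]] by simp
  moreover have "((\<lambda>y. k) has_integral (k * (b - a))) {a..b}"
    using has_integral_const_real[of k a b] assms by (simp add: mult.commute)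
  ultimately show ?thesis by (rule has_integral_add)
qed

lemma int_crep_plus: "((\<lambda>y. crep (y + s)) has_integral 0) {0..1}"
proof -
  define w where "w = s + 1/2"
  define fl where "fl = real_of_int \<lfloor>w\<rfloor>"
  define c where "c = 1 - (w - fl)"
  have fl: "fl \<le> w" "w < fl + 1" unfolding fl_def by linarith+
  have c: "0 < c" "c \<le> 1" using fl unfolding c_def by auto
  have h1: "((\<lambda>y. crep (y + s)) has_integral (1 * ((c\<^sup>2 - 0\<^sup>2)/2) + (s - fl) * (c - 0))) {0..c}"
  proof (rule has_integral_spike_finite[of "{c}", OF _ _ lin_has_int])
    fix y assume "y \<in> {0..c} - {c}"
    then have "0 \<le> y" "y < c" by auto
    then have "\<lfloor>y + s + 1/2\<rfloor> = \<lfloor>w\<rfloor>" using fl unfolding c_def w_def fl_def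
      by - (rule floor_unique; linarith)
    then show "crep (y + s) = 1 * y + (s - fl)" unfolding crep_def fl_def by simp
  qed (use c in auto)
  have h2: "((\<lambda>y. crep (y + s)) has_integral (1 * ((1\<^sup>2 - c\<^sup>2)/2) + (s - fl - 1) * (1 - c))) {c..1}"
  proof (rule has_integral_spike_finite[of "{}", OF _ _ lin_has_int])
    fix y assume "y \<in> {c..1} - {}"
    then have "c \<le> y" "y \<le> 1" by auto
    then have "\<lfloor>y + s + 1/2\<rfloor> = \<lfloor>w\<rfloor> + 1" using fl unfolding c_def w_def fl_def
      by - (rule floor_unique; linarith)
    then show "crep (y + s) = 1 * y + (s - fl - 1)" unfolding crep_def fl_def by simp
  qed (use c in auto)
  have "((\<lambda>y. crep (y + s)) has_integral
     ((1 * ((c\<^sup>2 - 0\<^sup>2)/2) + (s - fl) * (c - 0)) + (1 * ((1\<^sup>2 - c\<^sup>2)/2) + (s - fl - 1) * (1 - c)))) {0..1}"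
    by (rule has_integral_combine[OF _ _ h1 h2]) (use c in auto)
  moreover have "(1 * ((c\<^sup>2 - 0\<^sup>2)/2) + (s - fl) * (c - 0)) + (1 * ((1\<^sup>2 - c\<^sup>2)/2) + (s - fl - 1) * (1 - c)) = 0"
    unfolding c_def w_def by (simp add: field_simps power2_eq_square)
  ultimately show ?thesis by simp
qed

lemma int_crep_minus: "((\<lambda>y. crep (s - y)) has_integral 0) {0..1}"
proof -
  define w where "w = s + 1/2"
  define fl where "fl = real_of_int \<lfloor>w\<rfloor>"
  define c where "c = w - fl"
  have fl: "fl \<le> w" "w < fl + 1" unfolding fl_def by linarith+
  have c: "0 \<le> c" "c < 1" using fl unfolding c_def by auto
  have h1: "((\<lambda>y. crep (s - y)) has_integral ((-1) * ((c\<^sup>2 - 0\<^sup>2)/2) + (s - fl) * (c - 0))) {0..c}"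
  proof (rule has_integral_spike_finite[of "{}", OF _ _ lin_has_int])
    fix y assume "y \<in> {0..c} - {}"
    then have "0 \<le> y" "y \<le> c" by auto
    then have "\<lfloor>s - y + 1/2\<rfloor> = \<lfloor>w\<rfloor>" using fl unfolding c_def w_def fl_def
      by - (rule floor_unique; linarith)
    then show "crep (s - y) = (-1) * y + (s - fl)" unfolding crep_def fl_def by simp
  qed (use c in auto)
  have h2: "((\<lambda>y. crep (s - y)) has_integral ((-1) * ((1\<^sup>2 - c\<^sup>2)/2) + (s - fl + 1) * (1 - c))) {c..1}"
  proof (rule has_integral_spike_finite[of "{c}", OF _ _ lin_has_int])
    fix y assume "y \<in> {c..1} - {c}"
    then have "c < y" "y \<le> 1" by auto
    then have "\<lfloor>s - y + 1/2\<rfloor> = \<lfloor>w\<rfloor> - 1" using fl unfolding c_def w_def fl_def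
      by - (rule floor_unique; linarith)
    then show "crep (s - y) = (-1) * y + (s - fl + 1)" unfolding crep_def fl_def by simp
  qed (use c in auto)
  have "((\<lambda>y. crep (s - y)) has_integral
     (((-1) * ((c\<^sup>2 - 0\<^sup>2)/2) + (s - fl) * (c - 0)) + ((-1) * ((1\<^sup>2 - c\<^sup>2)/2) + (s - fl + 1) * (1 - c)))) {0..1}"
    by (rule has_integral_combine[OF _ _ h1 h2]) (use c in auto)
  moreover have "((-1) * ((c\<^sup>2 - 0\<^sup>2)/2) + (s - fl) * (c - 0)) + ((-1) * ((1\<^sup>2 - c\<^sup>2)/2) + (s - fl + 1) * (1 - c)) = 0"
    unfolding c_def w_def by (simp add: field_simps power2_eq_square)
  ultimately show ?thesis by simp
qed


definition rho :: "bool \<Rightarrow> real \<Rightarrow> real \<Rightarrow> real" where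
  "rho sg u y = (if sg then crep (u - y) else - crep (y - u))"

lemma rho_measurable[measurable]: "(\<lambda>x. rho sg (f x) (g x)) \<in> borel_measurable M"
  if [measurable]: "f \<in> borel_measurable M" "g \<in> borel_measurable M"
  unfolding rho_def by measurable

lemma rho_bound: "\<bar>rho sg u y\<bar> \<le> 1/2"
  using crep_bounds[of "u - y"] crep_bounds[of "y - u"] unfolding rho_def by auto

lemma rho_int: "integrable UU (rho sg u)" "integral\<^sup>L UU (rho sg u) = 0"
proof -
  have m: "rho sg u \<in> borel_measurable borel" unfolding rho_def by measurable
  show "integrable UU (rho sg u)" using UU_integral(1)[OF m rho_bound] .
  have "integral\<^sup>L UU (rho sg u) = integral {0..1} (rho sg u)" using UU_integral(2)[OF m rho_bound] .
  also have "\<dots> = 0"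
  proof (cases sg)
    case True
    then show ?thesis using int_crep_minus[of u] unfolding rho_def by (simp add: integral_unique)
  next
    case False
    have "((\<lambda>y. crep (y + - u)) has_integral 0) {0..1}"
      by (rule int_crep_plus)
    then have "integral {0..1} (\<lambda>y. crep (y - u)) = 0" using integral_unique by simp
    then show ?thesis using False unfolding rho_def by simp
  qed
  finally show "integral\<^sup>L UU (rho sg u) = 0" .
qed

lemma crep_neg: "y - u + 1/2 \<notin> \<int> \<Longrightarrow> - crep (y - u) = crep (u - y)"
proof -
  assume a: "y - u + 1/2 \<notin> \<int>"
  have "\<lfloor>y - u + 1/2\<rfloor> + \<lfloor>u - y + 1/2\<rfloor> = 0"
  proof -
    have "real_of_int \<lfloor>y - u + 1/2\<rfloor> < y - u + 1/2"
      using a of_int_floor_le[of "y - u + 1/2"] by (metis Ints_of_int order_less_le)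
    then show ?thesis by linarith
  qed
  then show ?thesis unfolding crep_def by (simp add: algebra_simps)
qed

lemma AE_rho: "AE y in UU. rho sg u y = crep (u - y)"
proof -
  have "AE y in lborel. y \<notin> range (\<lambda>n::int. u - 1/2 + of_int n)"
    by (rule AE_not_in[OF countable_imp_null_set_lborel]) auto
  then have "AE y in UU. y \<notin> range (\<lambda>n::int. u - 1/2 + of_int n)"
    unfolding UU_def by - (rule AE_uniform_measureI, simp, auto elim: eventually_mono)
  then show ?thesis
  proof eventually_elim
    case (elim y)
    have "y - u + 1/2 \<notin> \<int>"
    proof
      assume "y - u + 1/2 \<in> \<int>"
      then obtain n where "y - u + 1/2 = of_int n" by (auto elim: Ints_cases)
      then have "y = u - 1/2 + of_int n" by simp
      with elim show False by auto
    qed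
    then show ?case unfolding rho_def using crep_neg by auto
  qed
qed

lemma sq_ident:
  fixes Y Z :: real
  assumes "-1/2 \<le> Y" "Y < 1/2" "-1 < Z" "Z < 1" "Z = Y + of_int m"
  shows "Z\<^sup>2 = (if Y \<ge> 0 then 2*Y - 1 else 2*Y + 1) * Z + (\<bar>Y\<bar> - Y\<^sup>2)"
proof (cases "Y \<ge> 0")
  case True
  have "real_of_int m < 1" "real_of_int m > -2" using assms True by linarith+
  then have "m < 1" "m > -2" by linarith+
  then have "m = 0 \<or> m = -1" by linarith
  then show ?thesis using True assms by (auto simp: power2_eq_square algebra_simps)
next
  case False
  have "real_of_int m < 2" "real_of_int m > -1" using assms False by linarith+
  then have "m < 2" "m > -1" by linarith+
  then have "m = 0 \<or> m = 1" by linarith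
  then show ?thesis using False assms by (auto simp: power2_eq_square algebra_simps)
qed

lemma crep_diff_int: "\<exists>m::int. crep (q - y) - crep (p - y) = crep (q - p) + of_int m"
  unfolding crep_def by (rule exI[of _ "\<lfloor>q - p + 1/2\<rfloor> - \<lfloor>q - y + 1/2\<rfloor> + \<lfloor>p - y + 1/2\<rfloor>"]) simp

lemma T_int:
  fixes p q :: real and s1 s2 :: bool
  defines "Y \<equiv> crep (q - p)"
  shows "integrable UU (\<lambda>y. rho s1 q y - rho s2 p y)"
    "integral\<^sup>L UU (\<lambda>y. rho s1 q y - rho s2 p y) = 0"
    "integrable UU (\<lambda>y. (rho s1 q y - rho s2 p y)\<^sup>2)"
    "integral\<^sup>L UU (\<lambda>y. (rho s1 q y - rho s2 p y)\<^sup>2) = \<bar>Y\<bar> - Y\<^sup>2"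
proof -
  interpret prob_space UU by (rule prob_UU)
  show i: "integrable UU (\<lambda>y. rho s1 q y - rho s2 p y)"
    using rho_int by auto
  show z: "integral\<^sup>L UU (\<lambda>y. rho s1 q y - rho s2 p y) = 0"
    using rho_int by (simp add: Bochner_Integration.integral_diff)
  have m: "(\<lambda>y. (rho s1 q y - rho s2 p y)\<^sup>2) \<in> borel_measurable UU"
    by (simp add: meas_UU_iff)
  show "integrable UU (\<lambda>y. (rho s1 q y - rho s2 p y)\<^sup>2)"
  proof (rule integrable_const_bound[where B=1, OF _ m])
    have "\<bar>rho s1 q y - rho s2 p y\<bar> \<le> 1" for y
      using rho_bound[of s1 q y] rho_bound[of s2 p y] by linarith
    then have "norm ((rho s1 q y - rho s2 p y)\<^sup>2) \<le> 1" for y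
      by (simp add: abs_square_le_1)
    then show "AE y in UU. norm ((rho s1 q y - rho s2 p y)\<^sup>2) \<le> 1" by simp
  qed
  define al where "al = (if Y \<ge> 0 then 2*Y - 1 else 2*Y + 1)"
  have "AE y in UU. (rho s1 q y - rho s2 p y)\<^sup>2 = al * (rho s1 q y - rho s2 p y) + (\<bar>Y\<bar> - Y\<^sup>2)"
    using AE_rho[of s1 q] AE_rho[of s2 p]
  proof eventually_elim
    case (elim y)
    obtain m where m: "crep (q - y) - crep (p - y) = Y + of_int m"
      using crep_diff_int unfolding Y_def by blast
    show ?case unfolding al_def elim
      by (rule sq_ident[OF _ _ _ _ m]) (use crep_bounds[of "q - p"] crep_bounds[of "q - y"] crep_bounds[of "p - y"] in
        \<open>auto simp: Y_def\<close>)
  qed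
  then have "integral\<^sup>L UU (\<lambda>y. (rho s1 q y - rho s2 p y)\<^sup>2) = integral\<^sup>L UU (\<lambda>y. al * (rho s1 q y - rho s2 p y) + (\<bar>Y\<bar> - Y\<^sup>2))"
    by (rule integral_cong_AE[rotated 2]) (auto simp: meas_UU_iff)
  also have "\<dots> = \<bar>Y\<bar> - Y\<^sup>2"
    using i z prob_space by (simp add: Bochner_Integration.integral_add)
  finally show "integral\<^sup>L UU (\<lambda>y. (rho s1 q y - rho s2 p y)\<^sup>2) = \<bar>Y\<bar> - Y\<^sup>2" .
qed


lemma pos_space_UU: "pos_space N = PiM {0..<N} (\<lambda>_. UU)"
  unfolding pos_space_def UU_def ..

interpretation PUU: product_sigma_finite "\<lambda>_::nat. UU"
  unfolding product_sigma_finite_def using prob_space_imp_sigma_finite[OF prob_UU] by simp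

lemma prob_pos: "prob_space (pos_space N)"
  unfolding pos_space_UU by (rule prob_space_PiM) (rule prob_UU)

lemma fubini_coord:
  assumes c: "c < N" and f: "integrable (pos_space N) f"
  shows "integral\<^sup>L (pos_space N) (f :: _ \<Rightarrow> real) =
    (\<integral>x. (\<integral>y. f (x(c:=y)) \<partial>UU) \<partial>PiM ({0..<N} - {c}) (\<lambda>_. UU))"
proof -
  have e: "insert c ({0..<N} - {c}) = {0..<N}" using c by auto
  have f': "integrable (PiM (insert c ({0..<N} - {c})) (\<lambda>_. UU)) f" using f e unfolding pos_space_UU by simp
  show ?thesis using PUU.product_integral_insert[OF _ _ f'] unfolding pos_space_UU e by simp
qed

lemma bounded_integrable:
  fixes f :: "_ \<Rightarrow> real"
  assumes "prob_space M" "f \<in> borel_measurable M" "\<And>x. \<bar>f x\<bar> \<le> K"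
  shows "integrable M f"
proof -
  interpret prob_space M by fact
  show ?thesis by (rule integrable_const_bound[where B=K]) (use assms in auto)
qed

lemma coord_lemma:
  fixes G :: "(nat \<Rightarrow> real) \<Rightarrow> real"
  assumes abc: "a < N" "b < N" "c < N" "c \<noteq> a" "c \<noteq> b"
    and G[measurable]: "G \<in> borel_measurable (pos_space N)" and Gb: "\<And>x. \<bar>G x\<bar> \<le> K"
    and Gc: "\<And>x y. G (x(c:=y)) = G x"
  shows "(\<integral>x. G x * (rho s1 (x b) (x c) - rho s2 (x a) (x c)) \<partial>pos_space N) = 0"
    "(\<integral>x. G x * (rho s1 (x b) (x c) - rho s2 (x a) (x c))\<^sup>2 \<partial>pos_space N) =
     (\<integral>x. G x * (\<bar>crep (x b - x a)\<bar> - (crep (x b - x a))\<^sup>2) \<partial>pos_space N)"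
proof -
  have K: "0 \<le> K" using Gb[of undefined] by linarith
  have ma[measurable]: "(\<lambda>x. x i) \<in> borel_measurable (pos_space N)" if "i < N" for i
  proof -
    have "(\<lambda>x. x i) \<in> measurable (PiM {0..<N} (\<lambda>_. UU)) UU"
      by (rule measurable_component_singleton) (use that in simp)
    moreover have "measurable (PiM {0..<N} (\<lambda>_. UU)) UU = measurable (PiM {0..<N} (\<lambda>_. UU)) borel"
      by (rule measurable_cong_sets) auto
    ultimately show ?thesis unfolding pos_space_UU by simp
  qed
  have ma'[measurable]: "(\<lambda>x. x a) \<in> borel_measurable (pos_space N)" "(\<lambda>x. x b) \<in> borel_measurable (pos_space N)"
     "(\<lambda>x. x c) \<in> borel_measurable (pos_space N)" using ma abc by auto
  have rb: "\<bar>rho s1 u y - rho s2 v y\<bar> \<le> 1" for u v y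
    using rho_bound[of s1 u y] rho_bound[of s2 v y] by linarith
  have i1: "integrable (pos_space N) (\<lambda>x. G x * (rho s1 (x b) (x c) - rho s2 (x a) (x c)))"
  proof (rule bounded_integrable[OF prob_pos _, where K=K])
    fix x
    show "\<bar>G x * (rho s1 (x b) (x c) - rho s2 (x a) (x c))\<bar> \<le> K"
      unfolding abs_mult by (rule order_trans[OF mult_left_le Gb]) (use rb in auto)
  qed simp
  show "(\<integral>x. G x * (rho s1 (x b) (x c) - rho s2 (x a) (x c)) \<partial>pos_space N) = 0"
    unfolding fubini_coord[OF abc(3) i1] using abc
    by (simp add: Gc T_int)
  have i2: "integrable (pos_space N) (\<lambda>x. G x * (rho s1 (x b) (x c) - rho s2 (x a) (x c))\<^sup>2)"
  proof (rule bounded_integrable[OF prob_pos _, where K=K])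
    fix x
    have "\<bar>(rho s1 (x b) (x c) - rho s2 (x a) (x c))\<^sup>2\<bar> \<le> 1" using rb by (simp add: abs_square_le_1)
    then show "\<bar>G x * (rho s1 (x b) (x c) - rho s2 (x a) (x c))\<^sup>2\<bar> \<le> K"
      unfolding abs_mult by (rule order_trans[OF mult_left_le Gb]) auto
  qed simp
  have hb: "\<bar>\<bar>crep t\<bar> - (crep t)\<^sup>2\<bar> \<le> 1" for t
  proof -
    have a: "\<bar>crep t\<bar> \<le> 1" using crep_bounds[of t] by auto
    have "(crep t)\<^sup>2 = \<bar>crep t\<bar> * \<bar>crep t\<bar>" by (simp add: power2_eq_square abs_mult[symmetric])
    moreover have "\<bar>crep t\<bar> * \<bar>crep t\<bar> \<le> \<bar>crep t\<bar>" by (rule mult_left_le[OF a]) simp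
    moreover have "0 \<le> \<bar>crep t\<bar> * \<bar>crep t\<bar>" by simp
    ultimately show ?thesis using a by linarith
  qed
  have i3: "integrable (pos_space N) (\<lambda>x. G x * (\<bar>crep (x b - x a)\<bar> - (crep (x b - x a))\<^sup>2))"
  proof (rule bounded_integrable[OF prob_pos _, where K=K])
    fix x
    show "\<bar>G x * (\<bar>crep (x b - x a)\<bar> - (crep (x b - x a))\<^sup>2)\<bar> \<le> K"
      unfolding abs_mult by (rule order_trans[OF mult_left_le Gb]) (use hb in auto)
  qed simp
  interpret prob_space UU by (rule prob_UU)
  show "(\<integral>x. G x * (rho s1 (x b) (x c) - rho s2 (x a) (x c))\<^sup>2 \<partial>pos_space N) =
     (\<integral>x. G x * (\<bar>crep (x b - x a)\<bar> - (crep (x b - x a))\<^sup>2) \<partial>pos_space N)"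
    unfolding fubini_coord[OF abc(3) i2] fubini_coord[OF abc(3) i3] using abc
      prob_space.prob_space[OF prob_UU]
    by (simp add: Gc T_int)
qed

lemma condexp_via:
  fixes M :: "'a measure" and Y :: "'a \<Rightarrow> real" and f :: "'a \<Rightarrow> real" and \<phi> :: "real \<Rightarrow> real"
  assumes M: "prob_space M" and Y[measurable]: "Y \<in> borel_measurable M"
    and f[measurable]: "f \<in> borel_measurable M" and fb: "\<And>x. x \<in> space M \<Longrightarrow> \<bar>f x\<bar> \<le> K"
    and ph[measurable]: "\<phi> \<in> borel_measurable borel" and phb: "\<And>x. x \<in> space M \<Longrightarrow> \<bar>\<phi> (Y x)\<bar> \<le> K"
    and eq: "\<And>B. B \<in> sets borel \<Longrightarrow> (\<integral>x. indicator B (Y x) * f x \<partial>M) = (\<integral>x. indicator B (Y x) * \<phi> (Y x) \<partial>M)"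
  shows "AE x in M. real_cond_exp M (vimage_algebra (space M) Y borel) f x = \<phi> (Y x)"
proof -
  let ?F = "vimage_algebra (space M) Y borel"
  interpret prob_space M by fact
  have sub: "subalgebra M ?F"
    unfolding subalgebra_def using Y measurable_iff_sets[of Y M borel] by auto
  interpret finite_measure_subalgebra M ?F
    by unfold_locales (rule sub)
  have Ym: "Y \<in> measurable ?F borel"
    by (rule measurable_vimage_algebra1) auto
  show ?thesis
  proof (rule real_cond_exp_charact)
    fix A assume "A \<in> sets ?F"
    then obtain B where B: "B \<in> sets borel" "A = Y -` B \<inter> space M"
      using sets_vimage_algebra2[of Y "space M" borel] by auto
    have "(\<integral>x\<in>A. f x \<partial>M) = (\<integral>x. indicator B (Y x) * f x \<partial>M)"
      unfolding set_lebesgue_integral_def B(2)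
      by (rule Bochner_Integration.integral_cong) (auto simp: indicator_def)
    also have "\<dots> = (\<integral>x. indicator B (Y x) * \<phi> (Y x) \<partial>M)" by (rule eq[OF B(1)])
    also have "\<dots> = (\<integral>x\<in>A. \<phi> (Y x) \<partial>M)"
      unfolding set_lebesgue_integral_def B(2)
      by (rule Bochner_Integration.integral_cong) (auto simp: indicator_def)
    finally show "(\<integral>x\<in>A. f x \<partial>M) = (\<integral>x\<in>A. \<phi> (Y x) \<partial>M)" .
  next
    show "integrable M f" by (rule integrable_const_bound[where B=K]) (auto intro!: AE_I2 simp: fb)
    show "integrable M (\<lambda>x. \<phi> (Y x))" by (rule integrable_const_bound[where B=K]) (auto intro!: AE_I2 simp: phb)
    show "(\<lambda>x. \<phi> (Y x)) \<in> borel_measurable ?F"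
      using measurable_compose[OF Ym ph] by (simp add: comp_def)
  qed
qed

lemma condvar_via:
  fixes M :: "'a measure" and Y :: "'a \<Rightarrow> real" and f :: "'a \<Rightarrow> real" and \<phi> \<psi> :: "real \<Rightarrow> real"
  assumes M: "prob_space M" and Y[measurable]: "Y \<in> borel_measurable M"
    and f[measurable]: "f \<in> borel_measurable M" and fb: "\<And>x. x \<in> space M \<Longrightarrow> \<bar>f x\<bar> \<le> K"
    and ph[measurable]: "\<phi> \<in> borel_measurable borel" and phb: "\<And>x. x \<in> space M \<Longrightarrow> \<bar>\<phi> (Y x)\<bar> \<le> K"
    and ps[measurable]: "\<psi> \<in> borel_measurable borel" and psb: "\<And>x. x \<in> space M \<Longrightarrow> \<bar>\<psi> (Y x)\<bar> \<le> K2"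
    and eq: "\<And>B. B \<in> sets borel \<Longrightarrow> (\<integral>x. indicator B (Y x) * f x \<partial>M) = (\<integral>x. indicator B (Y x) * \<phi> (Y x) \<partial>M)"
    and eq2: "\<And>B. B \<in> sets borel \<Longrightarrow> (\<integral>x. indicator B (Y x) * (f x - \<phi> (Y x))\<^sup>2 \<partial>M) = (\<integral>x. indicator B (Y x) * \<psi> (Y x) \<partial>M)"
  shows "AE x in M. cond_var M (vimage_algebra (space M) Y borel) f x = \<psi> (Y x)"
proof -
  let ?F = "vimage_algebra (space M) Y borel"
  interpret prob_space M by fact
  have sub: "subalgebra M ?F"
    unfolding subalgebra_def using Y measurable_iff_sets[of Y M borel] by auto
  interpret finite_measure_subalgebra M ?F
    by unfold_locales (rule sub)
  have ae1: "AE x in M. real_cond_exp M ?F f x = \<phi> (Y x)"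
    by (rule condexp_via[OF M Y f fb ph phb eq])
  have rm: "real_cond_exp M ?F f \<in> borel_measurable M"
    by (rule measurable_from_subalg[OF sub borel_measurable_cond_exp])
  have ae2: "AE x in M. real_cond_exp M ?F (\<lambda>x. (f x - real_cond_exp M ?F f x)\<^sup>2) x
     = real_cond_exp M ?F (\<lambda>x. (f x - \<phi> (Y x))\<^sup>2) x"
    by (rule real_cond_exp_cong) (use ae1 rm in \<open>auto elim!: eventually_mono\<close>)
  have ae3: "AE x in M. real_cond_exp M ?F (\<lambda>x. (f x - \<phi> (Y x))\<^sup>2) x = \<psi> (Y x)"
  proof (rule condexp_via[OF M Y _ _ ps _ eq2, where K="max ((2*K)\<^sup>2) K2"])
    fix x assume x: "x \<in> space M"
    have K: "0 \<le> K" using fb[OF x] by linarith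
    have "\<bar>f x - \<phi> (Y x)\<bar> \<le> 2 * K" using fb[OF x] phb[OF x] by linarith
    then have "(f x - \<phi> (Y x))\<^sup>2 \<le> (2*K)\<^sup>2"
      by (metis abs_le_square_iff abs_of_nonneg K mult_nonneg_nonneg zero_le_numeral)
    then show "\<bar>(f x - \<phi> (Y x))\<^sup>2\<bar> \<le> max ((2*K)\<^sup>2) K2" by simp
  next
    fix x assume x: "x \<in> space M" show "\<bar>\<psi> (Y x)\<bar> \<le> max ((2*K)\<^sup>2) K2" using psb[OF x] by simp
  qed auto
  show ?thesis using ae2 ae3 unfolding cond_var_def by eventually_elim simp
qed

definition Tc :: "nat \<Rightarrow> nat \<Rightarrow> nat \<Rightarrow> (nat \<Rightarrow> real) \<Rightarrow> real" where
  "Tc a b c x = rho (c < b) (x b) (x c) - rho (c < a) (x a) (x c)"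

lemma comp_meas[measurable]: "i < N \<Longrightarrow> (\<lambda>x. x i) \<in> borel_measurable (pos_space N)"
proof -
  assume i: "i < N"
  have "(\<lambda>x. x i) \<in> measurable (PiM {0..<N} (\<lambda>_. UU)) UU"
    by (rule measurable_component_singleton) (use i in simp)
  moreover have "measurable (PiM {0..<N} (\<lambda>_. UU)) UU = measurable (PiM {0..<N} (\<lambda>_. UU)) borel"
    by (rule measurable_cong_sets) auto
  ultimately show ?thesis unfolding pos_space_UU by simp
qed

lemma Tc_meas: "a < N \<Longrightarrow> b < N \<Longrightarrow> c < N \<Longrightarrow> Tc a b c \<in> borel_measurable (pos_space N)"
  unfolding Tc_def by (intro borel_measurable_diff rho_measurable comp_meas)

lemma Tc_bound: "\<bar>Tc a b c x\<bar> \<le> 1"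
  unfolding Tc_def using rho_bound[of "c < b" "x b" "x c"] rho_bound[of "c < a" "x a" "x c"] by linarith

lemma Tc_upd: "c \<noteq> a \<Longrightarrow> c \<noteq> b \<Longrightarrow> d \<noteq> c \<Longrightarrow> Tc a b d (x(c:=y)) = Tc a b d x"
  unfolding Tc_def by simp

lemma ind_meas: "a < N \<Longrightarrow> b < N \<Longrightarrow> B \<in> sets borel \<Longrightarrow>
  (\<lambda>x. indicator B (crep (x b - x a)) :: real) \<in> borel_measurable (pos_space N)"
  by (intro borel_measurable_indicator' measurable_compose[OF _ crep_measurable] borel_measurable_diff comp_meas)
     (auto simp: measurable_def)

lemma edge_identities:
  fixes a b N :: nat and B :: "real set"
  assumes ab: "a < b" "b < N" and B: "B \<in> sets borel"
  shows "(\<integral>x. indicator B (crep (x b - x a)) * (\<Sum>c\<in>{0..<N}-{a,b}. Tc a b c x) \<partial>pos_space N) = 0"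
    "(\<integral>x. indicator B (crep (x b - x a)) * (\<Sum>c\<in>{0..<N}-{a,b}. Tc a b c x)\<^sup>2 \<partial>pos_space N)
      = (real N - 2) * (\<integral>x. indicator B (crep (x b - x a)) * (\<bar>crep (x b - x a)\<bar> - (crep (x b - x a))\<^sup>2) \<partial>pos_space N)"
proof -
  let ?C = "{0..<N}-{a,b}"
  let ?I = "\<lambda>x. indicator B (crep (x b - x a)) :: real"
  have a: "a < N" using ab by simp
  have Im: "?I \<in> borel_measurable (pos_space N)" by (rule ind_meas[OF a ab(2) B])
  have Ib: "\<bar>?I x\<bar> \<le> 1" for x by (simp add: indicator_def)
  have Iu: "?I (x(c:=y)) = ?I x" if "c \<in> ?C" for c x y using that by auto
  have int: "integrable (pos_space N) (\<lambda>x. ?I x * Tc a b c x)" if "c \<in> ?C" for c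
  proof (rule bounded_integrable[OF prob_pos _, where K=1])
    show "(\<lambda>x. ?I x * Tc a b c x) \<in> borel_measurable (pos_space N)"
      using Im Tc_meas[of a N b c] that a ab by auto
    fix x show "\<bar>?I x * Tc a b c x\<bar> \<le> 1" using Tc_bound[of a b c x] by (auto simp: indicator_def)
  qed
  have z: "(\<integral>x. ?I x * Tc a b c x \<partial>pos_space N) = 0" if "c \<in> ?C" for c
    using coord_lemma(1)[OF a ab(2) _ _ _ Im Ib Iu, of c "c < b" "c < a"] that unfolding Tc_def by auto
  show "(\<integral>x. ?I x * (\<Sum>c\<in>?C. Tc a b c x) \<partial>pos_space N) = 0"
    unfolding sum_distrib_left using int z by (subst Bochner_Integration.integral_sum) auto
  have int2: "integrable (pos_space N) (\<lambda>x. ?I x * (Tc a b c x * Tc a b d x))" if "c \<in> ?C" "d \<in> ?C" for c d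
  proof (rule bounded_integrable[OF prob_pos _, where K=1])
    show "(\<lambda>x. ?I x * (Tc a b c x * Tc a b d x)) \<in> borel_measurable (pos_space N)"
      using Im Tc_meas[of a N b c] Tc_meas[of a N b d] that a ab by auto
    fix x show "\<bar>?I x * (Tc a b c x * Tc a b d x)\<bar> \<le> 1"
      using Tc_bound[of a b c x] Tc_bound[of a b d x] unfolding abs_mult
      by (auto simp: indicator_def intro: mult_le_one)
  qed
  have z2: "(\<integral>x. ?I x * (Tc a b c x * Tc a b d x) \<partial>pos_space N) =
     (if c = d then (\<integral>x. ?I x * (\<bar>crep (x b - x a)\<bar> - (crep (x b - x a))\<^sup>2) \<partial>pos_space N) else 0)"
    if "c \<in> ?C" "d \<in> ?C" for c d
  proof (cases "c = d")
    case True
    then show ?thesis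
      using coord_lemma(2)[OF a ab(2) _ _ _ Im Ib Iu, of c "c < b" "c < a"] that
      unfolding Tc_def by (auto simp: power2_eq_square)
  next
    case False
    have Gm: "(\<lambda>x. ?I x * Tc a b d x) \<in> borel_measurable (pos_space N)"
      using Im Tc_meas[of a N b d] that a ab by auto
    have Gb: "\<bar>?I x * Tc a b d x\<bar> \<le> 1" for x using Tc_bound[of a b d x] by (auto simp: indicator_def)
    have Gu: "?I (x(c:=y)) * Tc a b d (x(c:=y)) = ?I x * Tc a b d x" for x y
      using that False by (auto simp: Tc_upd)
    show ?thesis
      using coord_lemma(1)[OF a ab(2) _ _ _ Gm Gb Gu, of "c < b" "c < a"] that False
      unfolding Tc_def by (auto simp: algebra_simps)
  qed
  have "(\<integral>x. ?I x * (\<Sum>c\<in>?C. Tc a b c x)\<^sup>2 \<partial>pos_space N)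
     = (\<integral>x. (\<Sum>c\<in>?C. \<Sum>d\<in>?C. ?I x * (Tc a b c x * Tc a b d x)) \<partial>pos_space N)"
    by (rule Bochner_Integration.integral_cong[OF refl]) (unfold power2_eq_square, subst sum_product, simp only: sum_distrib_left)
  also have "\<dots> = (\<Sum>c\<in>?C. \<Sum>d\<in>?C. (\<integral>x. ?I x * (Tc a b c x * Tc a b d x) \<partial>pos_space N))"
  proof -
    have "(\<integral>x. (\<Sum>c\<in>?C. \<Sum>d\<in>?C. ?I x * (Tc a b c x * Tc a b d x)) \<partial>pos_space N)
      = (\<Sum>c\<in>?C. (\<integral>x. (\<Sum>d\<in>?C. ?I x * (Tc a b c x * Tc a b d x)) \<partial>pos_space N))"
      by (rule Bochner_Integration.integral_sum) (rule Bochner_Integration.integrable_sum, rule int2, auto)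
    also have "\<dots> = (\<Sum>c\<in>?C. \<Sum>d\<in>?C. (\<integral>x. ?I x * (Tc a b c x * Tc a b d x) \<partial>pos_space N))"
      by (rule sum.cong[OF refl], rule Bochner_Integration.integral_sum) (rule int2, auto)
    finally show ?thesis .
  qed
  also have "\<dots> = (\<Sum>c\<in>?C. (\<integral>x. ?I x * (\<bar>crep (x b - x a)\<bar> - (crep (x b - x a))\<^sup>2) \<partial>pos_space N))"
    using z2 by (simp add: sum.delta)
  also have "\<dots> = (real N - 2) * (\<integral>x. ?I x * (\<bar>crep (x b - x a)\<bar> - (crep (x b - x a))\<^sup>2) \<partial>pos_space N)"
  proof -
    have "card ?C = N - 2" using ab by (simp add: card_Diff_subset)
    then show ?thesis using ab by (simp add: of_nat_diff)
  qed
  finally show "(\<integral>x. ?I x * (\<Sum>c\<in>?C. Tc a b c x)\<^sup>2 \<partial>pos_space N)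
      = (real N - 2) * (\<integral>x. ?I x * (\<bar>crep (x b - x a)\<bar> - (crep (x b - x a))\<^sup>2) \<partial>pos_space N)" .
qed

lemma set_edges: "set (edges N) = {(a, b). a < b \<and> b < N}"
  unfolding edges_def by auto

lemma distinct_edges: "distinct (edges N)"
  unfolding edges_def by (induction N) (auto simp: distinct_map inj_on_def)

lemma edge_nth: "k < nE N \<Longrightarrow> fst (edges N ! k) < snd (edges N ! k) \<and> snd (edges N ! k) < N"
  using nth_mem[of k "edges N"] unfolding nE_def set_edges by auto

lemma edge_inj: "k < nE N \<Longrightarrow> k' < nE N \<Longrightarrow> edges N ! k = edges N ! k' \<Longrightarrow> k = k'"
  using distinct_edges[of N] nth_eq_iff_index_eq unfolding nE_def by blast

lemma sum_edges: "(\<Sum>k<nE N. G (edges N ! k)) = (\<Sum>q\<in>set (edges N). G q)"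
proof -
  have "(\<Sum>k<nE N. G (edges N ! k)) = sum_list (map G (edges N))"
    unfolding sum_list_sum_nth nE_def by (simp add: lessThan_atLeast0)
  also have "\<dots> = (\<Sum>q\<in>set (edges N). G q)"
    by (rule sum_list_distinct_conv_sum_set[OF distinct_edges])
  finally show ?thesis .
qed

lemma sum_edges_delta: "(\<Sum>k<nE N. (if edges N ! k = p then G (edges N ! k) else 0))
   = (if fst p < snd p \<and> snd p < N then G p else 0)"
  unfolding sum_edges[of "\<lambda>q. if q = p then G q else 0"] sum.delta[OF finite_set]
  by (cases p) (simp add: set_edges)

lemma sum_edges_pairs: "(\<Sum>k<nE N. G (edges N ! k)) = (\<Sum>b<N. \<Sum>a<b. G (a, b))"
proof (induction N)
  case 0 then show ?case by (simp add: sum_edges set_edges)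
next
  case (Suc N)
  have e: "set (edges (Suc N)) = set (edges N) \<union> (\<lambda>a. (a, N)) ` {..<N}" unfolding set_edges by auto
  have "(\<Sum>k<nE (Suc N). G (edges (Suc N) ! k)) = (\<Sum>q\<in>set (edges N) \<union> (\<lambda>a. (a, N)) ` {..<N}. G q)"
    unfolding sum_edges e ..
  also have "\<dots> = (\<Sum>q\<in>set (edges N). G q) + (\<Sum>q\<in>(\<lambda>a. (a, N)) ` {..<N}. G q)"
    by (rule sum.union_disjoint[OF finite_set]) (auto simp: set_edges)
  also have "(\<Sum>q\<in>(\<lambda>a. (a, N)) ` {..<N}. G q) = (\<Sum>a<N. G (a, N))"
    by (subst sum.reindex) (auto simp: inj_on_def)
  finally show ?case using Suc by (simp add: sum_edges)
qed



definition inc :: "nat \<Rightarrow> nat \<Rightarrow> nat \<Rightarrow> real" where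
  "inc N u k = (if snd (edges N ! k) = u then 1 else 0) - (if fst (edges N ! k) = u then 1 else 0)"

definition sdiv :: "nat \<Rightarrow> real vec \<Rightarrow> nat \<Rightarrow> real" where
  "sdiv N v u = (\<Sum>k<nE N. v $ k * inc N u k)"

definition gvec :: "nat \<Rightarrow> real vec \<Rightarrow> real vec" where
  "gvec N v = vec (nE N) (\<lambda>k. (sdiv N v (snd (edges N ! k)) - sdiv N v (fst (edges N ! k))) / real N)"

definition circ :: "nat \<Rightarrow> real vec \<Rightarrow> bool" where
  "circ N w \<longleftrightarrow> (\<forall>\<phi>. (\<Sum>k<nE N. w $ k * (\<phi> (snd (edges N ! k)) - \<phi> (fst (edges N ! k)))) = 0)"

lemma sum_ind: "c < (N::nat) \<Longrightarrow> (\<Sum>u<N. \<phi> u * (if c = u then 1 else 0)) = (\<phi> c :: real)"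
proof -
  assume c: "c < N"
  have "(\<Sum>u<N. \<phi> u * (if c = u then 1 else 0)) = (\<Sum>u<N. if u = c then \<phi> c else 0)"
    by (rule sum.cong) auto
  also have "\<dots> = \<phi> c" using sum.delta[of "{..<N}" c "\<lambda>_. \<phi> c"] c by simp
  finally show ?thesis .
qed

lemma L1: "k < nE N \<Longrightarrow> \<phi> (snd (edges N ! k)) - \<phi> (fst (edges N ! k)) = (\<Sum>u<N. \<phi> u * inc N u k)"
  using edge_nth[of k N] unfolding inc_def by (simp add: right_diff_distrib sum_subtractf sum_ind)

lemma L2: "(\<Sum>k<nE N. v $ k * (\<phi> (snd (edges N ! k)) - \<phi> (fst (edges N ! k)))) = (\<Sum>u<N. \<phi> u * sdiv N v u)"
proof -
  have "(\<Sum>k<nE N. v $ k * (\<phi> (snd (edges N ! k)) - \<phi> (fst (edges N ! k))))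
      = (\<Sum>k<nE N. \<Sum>u<N. v $ k * (\<phi> u * inc N u k))"
    by (rule sum.cong[OF refl]) (simp add: L1 sum_distrib_left)
  also have "\<dots> = (\<Sum>u<N. \<Sum>k<nE N. v $ k * (\<phi> u * inc N u k))" by (rule sum.swap)
  also have "\<dots> = (\<Sum>u<N. \<phi> u * sdiv N v u)"
    unfolding sdiv_def by (rule sum.cong[OF refl]) (simp add: sum_distrib_left algebra_simps)
  finally show ?thesis .
qed

lemma L3: "(\<Sum>u<N. sdiv N v u) = 0"
  using L2[of v "\<lambda>_. 1" N] by simp

lemma L4: "(\<Sum>b<N. \<Sum>a<b. (s b - s a) * (\<phi> b - \<phi> a)) =
  real N * (\<Sum>u<N. s u * \<phi> u) - (\<Sum>u<N. s u) * (\<Sum>u<N. \<phi> u :: real)"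
proof (induction N)
  case 0 then show ?case by simp
next
  case (Suc N)
  have "(\<Sum>a<N. (s N - s a) * (\<phi> N - \<phi> a)) =
     real N * (s N * \<phi> N) - s N * (\<Sum>u<N. \<phi> u) - \<phi> N * (\<Sum>u<N. s u) + (\<Sum>u<N. s u * \<phi> u)"
    by (simp add: algebra_simps sum.distrib sum_subtractf sum_distrib_left)
  then show ?case using Suc by (simp add: algebra_simps)
qed

lemma L5:
  assumes "N > 0" and dv: "dim_vec v = nE N"
  shows "circ N (v - gvec N v)"
  unfolding circ_def
proof
  fix \<phi> :: "nat \<Rightarrow> real"
  let ?s = "sdiv N v"
  have g: "(\<Sum>k<nE N. gvec N v $ k * (\<phi> (snd (edges N ! k)) - \<phi> (fst (edges N ! k))))
     = (\<Sum>k<nE N. (\<lambda>(a, b). (?s b - ?s a) * (\<phi> b - \<phi> a) / real N) (edges N ! k))"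
    unfolding gvec_def by (rule sum.cong[OF refl]) (auto simp: case_prod_beta)
  also have "\<dots> = (\<Sum>b<N. \<Sum>a<b. (?s b - ?s a) * (\<phi> b - \<phi> a)) / real N"
    unfolding sum_edges_pairs by (simp add: sum_divide_distrib)
  also have "\<dots> = (\<Sum>u<N. \<phi> u * sdiv N v u)"
    unfolding L4 L3 using assms by (simp add: mult.commute)
  finally have g: "(\<Sum>k<nE N. gvec N v $ k * (\<phi> (snd (edges N ! k)) - \<phi> (fst (edges N ! k))))
      = (\<Sum>u<N. \<phi> u * sdiv N v u)" .
  have "(\<Sum>k<nE N. (v - gvec N v) $ k * (\<phi> (snd (edges N ! k)) - \<phi> (fst (edges N ! k))))
    = (\<Sum>k<nE N. v $ k * (\<phi> (snd (edges N ! k)) - \<phi> (fst (edges N ! k))))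
      - (\<Sum>k<nE N. gvec N v $ k * (\<phi> (snd (edges N ! k)) - \<phi> (fst (edges N ! k))))"
    using dv by (simp add: gvec_def sum_subtractf[symmetric] left_diff_distrib)
  also have "\<dots> = 0" using g L2[of v \<phi> N] by simp
  finally show "(\<Sum>k<nE N. (v - gvec N v) $ k * (\<phi> (snd (edges N ! k)) - \<phi> (fst (edges N ! k)))) = 0" .
qed


lemma ifmul: "((if A then 1 else 0) - (if B then 1 else 0)) * (D::real) = (if A then D else 0) - (if B then D else 0)"
  by (cases A; cases B) simp_all

lemma sum_rot: "(\<Sum>i<(L::nat). f ((i + 1) mod L)) = (\<Sum>i<L. (f i :: real))"
proof (cases L)
  case 0 then show ?thesis by simp
next
  case (Suc m)
  have "(\<Sum>i<Suc m. f ((i + 1) mod Suc m)) = (\<Sum>i<m. f ((i + 1) mod Suc m)) + f 0"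
    by (simp add: sum.lessThan_Suc)
  also have "(\<Sum>i<m. f ((i + 1) mod Suc m)) = (\<Sum>i<m. f (Suc i))"
    by (rule sum.cong) auto
  also have "(\<Sum>i<m. f (Suc i)) + f 0 = (\<Sum>i<Suc m. f i)"
    by (subst sum.lessThan_Suc_shift) simp
  finally show ?thesis using Suc by simp
qed

locale cyc_ctx =
  fixes N :: nat and vs :: "nat list"
  assumes cyc: "is_cycle N vs"
begin

abbreviation "L \<equiv> length vs"
definition nx :: "nat \<Rightarrow> nat" where "nx i = vs ! ((i + 1) mod L)"

lemma L3': "L \<ge> 3" and dvs: "distinct vs" and svs: "set vs \<subseteq> {0..<N}"
  using cyc unfolding is_cycle_def by auto

lemma L0: "0 < L" using L3' by linarith

lemma mL: "(k + 1) mod L < L" using L0 by simp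

lemma nx_ne: "i < L \<Longrightarrow> nx i \<noteq> vs ! i"
proof
  assume i: "i < L" and e: "nx i = vs ! i"
  have "(i + 1) mod L < L" by (rule mL)
  then have "(i + 1) mod L = i" using e dvs i nth_eq_iff_index_eq unfolding nx_def by blast
  moreover have "(i + 1) mod L \<noteq> i"
  proof (cases "i + 1 < L")
    case True then show ?thesis by simp
  next
    case False
    then have "i + 1 = L" using i by simp
    then show ?thesis using L3' by simp
  qed
  ultimately show False by simp
qed

lemma nx_lt: "nx i < N"
proof -
  have "nx i \<in> set vs" unfolding nx_def by (rule nth_mem[OF mL])
  then show ?thesis using svs by auto
qed

lemma vs_lt: "i < L \<Longrightarrow> vs ! i < N"
proof -
  assume "i < L"
  then have "vs ! i \<in> set vs" by (rule nth_mem)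
  then show ?thesis using svs by auto
qed

lemma U1: "i < L \<Longrightarrow> j < L \<Longrightarrow> vs ! i = vs ! j \<Longrightarrow> i = j"
  using dvs nth_eq_iff_index_eq by blast

lemma U2: "i < L \<Longrightarrow> j < L \<Longrightarrow> vs ! i = nx j \<Longrightarrow> nx i = vs ! j \<Longrightarrow> False"
proof -
  assume i: "i < L" and j: "j < L" and a: "vs ! i = nx j" and b: "nx i = vs ! j"
  have m: "(k + 1) mod L < L" for k by (rule mL)
  have 1: "i = (j + 1) mod L" using U1[OF i m a[unfolded nx_def]] .
  have 2: "(i + 1) mod L = j" using U1[OF m j b[unfolded nx_def]] .
  have "((j + 1) mod L + 1) mod L = j" using 1 2 by simp
  then have "(j + 2) mod L = j" by (simp add: mod_Suc_eq)
  moreover have "(j + 2) mod L \<noteq> j"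
  proof (cases "j + 2 < L")
    case True then show ?thesis by simp
  next
    case False
    then have "(j + 2) mod L = (j + 2 - L) mod L" by (simp add: le_mod_geq)
    also have "\<dots> = j + 2 - L" using j L3' by (intro mod_less) linarith
    finally show ?thesis using False L3' by linarith
  qed
  ultimately show False by simp
qed


lemma cnt1: "i0 < L \<Longrightarrow> (\<Sum>i<L. if (vs ! i, nx i) = (vs ! i0, nx i0) then 1 else 0) = (1::real)"
proof -
  assume i0: "i0 < L"
  have "(\<Sum>i<L. if (vs ! i, nx i) = (vs ! i0, nx i0) then 1 else 0) = (\<Sum>i<L. if i = i0 then 1 else (0::real))"
    by (rule sum.cong[OF refl]) (use U1 i0 in auto)
  then show ?thesis using i0 by simp
qed

lemma cnt2: "i0 < L \<Longrightarrow> (\<Sum>i<L. if (nx i, vs ! i) = (nx i0, vs ! i0) then 1 else 0) = (1::real)"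
proof -
  assume i0: "i0 < L"
  have "(\<Sum>i<L. if (nx i, vs ! i) = (nx i0, vs ! i0) then 1 else 0) = (\<Sum>i<L. if i = i0 then 1 else (0::real))"
    by (rule sum.cong[OF refl]) (use U1 i0 in auto)
  then show ?thesis using i0 by simp
qed

lemma cs_rep: "cyc_sign N vs k = (\<Sum>i<L. (if (vs ! i, nx i) = edges N ! k then 1 else 0)
    - (if (nx i, vs ! i) = edges N ! k then 1 else 0))"
proof -
  let ?p = "edges N ! k"
  show ?thesis
  proof (cases "\<exists>i<L. (vs ! i, nx i) = ?p")
    case True
    then obtain i0 where i0: "i0 < L" "(vs ! i0, nx i0) = ?p" by blast
    have s1: "(\<Sum>i<L. if (vs ! i, nx i) = ?p then 1 else 0) = (1::real)" using cnt1[OF i0(1)] i0(2) by simp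
    have s2: "(\<Sum>i<L. if (nx i, vs ! i) = ?p then 1 else 0) = (0::real)"
    proof (rule sum.neutral, rule ballI)
      fix x assume "x \<in> {..<L}"
      then have x: "x < L" by simp
      have "(nx x, vs ! x) \<noteq> ?p"
      proof
        assume "(nx x, vs ! x) = ?p"
        then have "(nx x, vs ! x) = (vs ! i0, nx i0)" using i0(2) by simp
        then have "vs ! i0 = nx x" "nx i0 = vs ! x" by simp_all
        then show False using U2[OF i0(1) x] by blast
      qed
      then show "(if (nx x, vs ! x) = ?p then 1 else 0) = (0::real)" by simp
    qed
    have "cyc_sign N vs k = 1" using True unfolding cyc_sign_def nx_def by auto
    then show ?thesis using s1 s2 by (simp add: sum_subtractf)
  next
    case False
    note F = this
    have s1: "(\<Sum>i<L. if (vs ! i, nx i) = ?p then 1 else 0) = (0::real)"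
      by (rule sum.neutral) (use F in auto)
    show ?thesis
    proof (cases "\<exists>i<L. (nx i, vs ! i) = ?p")
      case True
      then obtain i0 where i0: "i0 < L" "(nx i0, vs ! i0) = ?p" by blast
      have s2: "(\<Sum>i<L. if (nx i, vs ! i) = ?p then 1 else 0) = (1::real)" using cnt2[OF i0(1)] i0(2) by simp
      have "cyc_sign N vs k = -1" using True F unfolding cyc_sign_def nx_def by auto
      then show ?thesis using s1 s2 by (simp add: sum_subtractf)
    next
      case False
      have s2: "(\<Sum>i<L. if (nx i, vs ! i) = ?p then 1 else 0) = (0::real)"
        by (rule sum.neutral) (use False in auto)
      have "cyc_sign N vs k = 0" using False F unfolding cyc_sign_def nx_def by auto
      then show ?thesis using s1 s2 by (simp add: sum_subtractf)
    qed
  qed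
qed

lemma cyc_orth: "(\<Sum>k<nE N. cyc_sign N vs k * (\<phi> (snd (edges N ! k)) - \<phi> (fst (edges N ! k)))) = 0"
proof -
  let ?D = "\<lambda>q. \<phi> (snd q) - \<phi> (fst q)"
  have "(\<Sum>k<nE N. cyc_sign N vs k * ?D (edges N ! k))
     = (\<Sum>k<nE N. \<Sum>i<L. (if (vs ! i, nx i) = edges N ! k then ?D (edges N ! k) else 0)
                        - (if (nx i, vs ! i) = edges N ! k then ?D (edges N ! k) else 0))"
    unfolding cs_rep sum_distrib_right
    by (rule sum.cong[OF refl], rule sum.cong[OF refl], rule ifmul)
  also have "\<dots> = (\<Sum>i<L. (\<Sum>k<nE N. (if (vs ! i, nx i) = edges N ! k then ?D (edges N ! k) else 0))
                        - (\<Sum>k<nE N. (if (nx i, vs ! i) = edges N ! k then ?D (edges N ! k) else 0)))"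
    by (subst sum.swap) (simp only: sum_subtractf)
  also have "\<dots> = (\<Sum>i<L. \<phi> (nx i) - \<phi> (vs ! i))"
  proof (rule sum.cong[OF refl])
    fix i assume i: "i \<in> {..<L}"
    have a: "vs ! i < N" "nx i < N" "nx i \<noteq> vs ! i" using vs_lt nx_lt nx_ne i by auto
    show "(\<Sum>k<nE N. (if (vs ! i, nx i) = edges N ! k then ?D (edges N ! k) else 0))
                        - (\<Sum>k<nE N. (if (nx i, vs ! i) = edges N ! k then ?D (edges N ! k) else 0))
        = \<phi> (nx i) - \<phi> (vs ! i)"
      using sum_edges_delta[where N=N and p="(vs ! i, nx i)" and G="?D"]
        sum_edges_delta[where N=N and p="(nx i, vs ! i)" and G="?D"] a
      unfolding eq_commute[of "(_, _)" "edges N ! _"] by auto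
  qed
  also have "\<dots> = 0" unfolding sum_subtractf nx_def using sum_rot[of "\<lambda>j. \<phi> (vs ! j)" L] by simp
  finally show ?thesis .
qed

end

lemma ord_pair_eq:
  assumes "k < nE N" "k' < nE N"
    and "edges N ! k = (A, B) \<or> edges N ! k = (B, A)"
    and "edges N ! k' = (A, B) \<or> edges N ! k' = (B, A)"
  shows "k = k'"
proof -
  have "fst (edges N ! k) < snd (edges N ! k)" "fst (edges N ! k') < snd (edges N ! k')"
    using edge_nth assms(1,2) by auto
  then have "edges N ! k = edges N ! k'" using assms(3,4) by auto
  then show ?thesis using edge_inj assms(1,2) by blast
qed

locale tree_ctx =
  fixes N :: nat and T :: "nat set" and r :: "nat \<Rightarrow> real"
  assumes circ: "\<And>\<phi>. (\<Sum>k<nE N. r k * (\<phi> (snd (edges N ! k)) - \<phi> (fst (edges N ! k)))) = 0"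
    and supp: "\<And>k. k < nE N \<Longrightarrow> r k \<noteq> 0 \<Longrightarrow> k \<in> T"
begin

definition S where "S = {k. k < nE N \<and> r k \<noteq> 0}"
definition adj where "adj u v \<longleftrightarrow> (\<exists>k\<in>S. edges N ! k = (u, v) \<or> edges N ! k = (v, u))"

lemma adj_sym: "adj u v \<Longrightarrow> adj v u" unfolding adj_def by auto

lemma adj_lt: "adj u v \<Longrightarrow> u < N \<and> v < N \<and> u \<noteq> v"
  unfolding adj_def S_def using edge_nth by fastforce

lemma ext:
  assumes "adj p u" shows "\<exists>w. adj u w \<and> w \<noteq> p"
proof (rule ccontr)
  assume no: "\<not> (\<exists>w. adj u w \<and> w \<noteq> p)"
  obtain k1 where k1: "k1 \<in> S" "edges N ! k1 = (p, u) \<or> edges N ! k1 = (u, p)"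
    using assms unfolding adj_def by blast
  have k1n: "k1 < nE N" and rk1: "r k1 \<noteq> 0" using k1 unfolding S_def by auto
  have pu: "p \<noteq> u" using adj_lt[OF assms] by simp
  define inc where "inc k = (if snd (edges N ! k) = u then 1 else 0) - (if fst (edges N ! k) = u then 1 else (0::real))" for k
  have z: "r k * inc k = 0" if "k < nE N" "k \<noteq> k1" for k
  proof (cases "r k = 0")
    case False
    then have kS: "k \<in> S" using that unfolding S_def by auto
    have "\<not> (snd (edges N ! k) = u \<or> fst (edges N ! k) = u)"
    proof
      assume "snd (edges N ! k) = u \<or> fst (edges N ! k) = u"
      then obtain w where w: "edges N ! k = (u, w) \<or> edges N ! k = (w, u)"
        by (metis prod.collapse)
      then have "adj u w" using kS unfolding adj_def by auto
      then have "w = p" using no by auto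
      then have "k = k1" using ord_pair_eq[OF that(1) k1n] w k1(2) by auto
      then show False using that by simp
    qed
    then show ?thesis unfolding inc_def by simp
  qed simp
  have "(\<Sum>k<nE N. r k * inc k) = 0"
    using circ[of "\<lambda>z. if z = u then 1 else 0"] unfolding inc_def by simp
  moreover have "(\<Sum>k<nE N. r k * inc k) = r k1 * inc k1"
    by (rule sum.mono_neutral_cong_right[where S="{k1}", simplified]) (use k1n z in auto)
  moreover have "inc k1 = 1 \<or> inc k1 = -1" using k1(2) pu unfolding inc_def by (elim disjE) simp_all
  ultimately show False using rk1 by auto
qed


lemma walk:
  assumes "adj a0 b0"
  obtains v where "\<And>i. adj (v i) (v (Suc i))" "\<And>i. v (Suc (Suc i)) \<noteq> v i"
proof -
  define step where "step = (\<lambda>(p::nat, u::nat). (u, SOME w. adj u w \<and> w \<noteq> p))"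
  define sq where "sq i = (step ^^ i) (a0, b0)" for i
  have sqS: "sq (Suc i) = (snd (sq i), SOME w. adj (snd (sq i)) w \<and> w \<noteq> fst (sq i))" for i
    unfolding sq_def step_def by (simp add: case_prod_beta)
  have inv: "adj (fst (sq i)) (snd (sq i))" for i
  proof (induction i)
    case 0 then show ?case using assms unfolding sq_def by simp
  next
    case (Suc i)
    have "\<exists>w. adj (snd (sq i)) w \<and> w \<noteq> fst (sq i)" by (rule ext[OF Suc])
    from someI_ex[OF this] show ?case unfolding sqS by simp
  qed
  define v where "v i = fst (sq i)" for i
  have vS: "v (Suc i) = snd (sq i)" for i unfolding v_def sqS by simp
  show ?thesis
  proof
    fix i show "adj (v i) (v (Suc i))" using inv[of i] unfolding vS unfolding v_def by simp
  next
    fix i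
    have "\<exists>w. adj (snd (sq i)) w \<and> w \<noteq> fst (sq i)" by (rule ext[OF inv])
    from someI_ex[OF this] have "snd (sq (Suc i)) \<noteq> fst (sq i)" unfolding sqS by simp
    then show "v (Suc (Suc i)) \<noteq> v i" unfolding vS unfolding v_def .
  qed
qed

lemma tree_zero:
  assumes nocyc: "\<not> (\<exists>vs. is_cycle N vs \<and> cyc_edges N vs \<subseteq> T)"
  shows "k < nE N \<Longrightarrow> r k = 0"
proof (rule ccontr)
  assume k0: "k < nE N" and rk: "r k \<noteq> 0"
  obtain a0 b0 where e0: "edges N ! k = (a0, b0)" by (cases "edges N ! k")
  have a0: "adj a0 b0" unfolding adj_def S_def using k0 rk e0 by auto
  obtain v where v1: "\<And>i. adj (v i) (v (Suc i))" and v2: "\<And>i. v (Suc (Suc i)) \<noteq> v i"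
    using walk[OF a0] by blast
  have vN: "v i < N" for i using adj_lt[OF v1[of i]] by simp
  have "\<not> inj_on v {..N}"
  proof
    assume "inj_on v {..N}"
    moreover have "v ` {..N} \<subseteq> {..<N}" using vN by auto
    ultimately have "card {..N} \<le> card {..<N}" by (intro card_inj_on_le) auto
    then show False by simp
  qed
  then obtain i j where ij: "i \<le> N" "j \<le> N" "i \<noteq> j" "v i = v j" unfolding inj_on_def by auto
  have ex: "\<exists>j. \<exists>i<j. v i = v j"
  proof (cases "i < j")
    case True then show ?thesis using ij by blast
  next
    case False then have "j < i" using ij by simp
    then show ?thesis using ij by metis
  qed
  define j0 where "j0 = (LEAST j. \<exists>i<j. v i = v j)"
  have "\<exists>i<j0. v i = v j0" unfolding j0_def by (rule LeastI_ex[OF ex])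
  then obtain i0 where i0: "i0 < j0" "v i0 = v j0" by blast
  have minj: "\<not> (\<exists>i<j. v i = v j)" if "j < j0" for j
    using that unfolding j0_def by (rule not_less_Least)
  define vs where "vs = map v [i0..<j0]"
  have len: "length vs = j0 - i0" unfolding vs_def by simp
  have vsn: "l < j0 - i0 \<Longrightarrow> vs ! l = v (i0 + l)" for l unfolding vs_def by simp
  have inj: "inj_on v {i0..<j0}"
  proof (rule inj_onI)
    fix a b assume a: "a \<in> {i0..<j0}" and b: "b \<in> {i0..<j0}" and e: "v a = v b"
    show "a = b"
    proof (rule ccontr)
      assume "a \<noteq> b"
      then have "a < b \<or> b < a" by auto
      then show False
      proof
        assume "a < b" then show False using minj[of b] b e by auto
      next
        assume "b < a" then show False using minj[of a] a e by auto
      qed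
    qed
  qed
  have dist: "distinct vs" unfolding vs_def by (simp add: distinct_map inj)
  have L3: "j0 - i0 \<ge> 3"
  proof -
    have "j0 \<noteq> Suc i0" using i0 adj_lt[OF v1[of i0]] by auto
    moreover have "j0 \<noteq> Suc (Suc i0)" using i0 v2[of i0] by auto
    ultimately show ?thesis using i0 by linarith
  qed
  have isc: "is_cycle N vs" unfolding is_cycle_def using dist L3 len vN unfolding vs_def by auto
  have nxt: "vs ! ((l + 1) mod length vs) = v (i0 + l + 1)" if "l < length vs" for l
  proof (cases "l + 1 < length vs")
    case True then show ?thesis using vsn len by simp
  next
    case False
    then have "l + 1 = length vs" using that by simp
    then have "(l + 1) mod length vs = 0" by simp
    moreover have "vs ! 0 = v i0" using vsn[of 0] i0 by simp
    moreover have "i0 + l + 1 = j0" using \<open>l + 1 = length vs\<close> len i0 by simp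
    ultimately show ?thesis using i0 by simp
  qed
  have "cyc_edges N vs \<subseteq> T"
  proof
    fix k assume "k \<in> cyc_edges N vs"
    then have k: "k < nE N" "cyc_sign N vs k \<noteq> 0" unfolding cyc_edges_def by auto
    then obtain l where l: "l < length vs"
      "edges N ! k = (vs ! l, vs ! ((l + 1) mod length vs)) \<or> edges N ! k = (vs ! ((l + 1) mod length vs), vs ! l)"
      unfolding cyc_sign_def by (auto split: if_splits)
    have e: "edges N ! k = (v (i0 + l), v (Suc (i0 + l))) \<or> edges N ! k = (v (Suc (i0 + l)), v (i0 + l))"
      using l nxt[OF l(1)] vsn[of l] len by auto
    obtain k' where k': "k' \<in> S" "edges N ! k' = (v (i0 + l), v (Suc (i0 + l))) \<or> edges N ! k' = (v (Suc (i0 + l)), v (i0 + l))"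
      using v1[of "i0 + l"] unfolding adj_def by blast
    have "k' < nE N" "r k' \<noteq> 0" using k'(1) unfolding S_def by auto
    moreover have "k = k'" by (rule ord_pair_eq[OF k(1) \<open>k' < nE N\<close> e k'(2)])
    ultimately show "k \<in> T" using supp by auto
  qed
  then show False using nocyc isc by blast
qed
end

lemma mv_index: "A \<in> carrier_mat nr nc \<Longrightarrow> v \<in> carrier_vec nc \<Longrightarrow> i < nr \<Longrightarrow>
  (A *\<^sub>v v) $ i = (\<Sum>j<nc. A $$ (i, j) * v $ j)"
  by (simp add: scalar_prod_def lessThan_atLeast0)

locale net =
  fixes N :: nat and T :: "nat set" and cyc :: "nat \<Rightarrow> nat list"
  assumes N3: "N \<ge> 3" and st: "spanning_tree N T" and fc: "fundamental_cycles N T cyc"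
begin

abbreviation "n \<equiv> nE N"
abbreviation "nt \<equiv> nontree N T"
abbreviation "m \<equiv> length (nontree N T)"
abbreviation "C \<equiv> cycle_mat N T cyc"

lemma nt_set: "set nt = {0..<n} - T" and nt_dist: "distinct nt"
  unfolding nontree_def by auto

lemma C_carrier: "C \<in> carrier_mat m n" unfolding cycle_mat_def by simp

lemma C_idx: "i < m \<Longrightarrow> k < n \<Longrightarrow> C $$ (i, k) = cyc_sign N (cyc (nt ! i)) k"
  unfolding cycle_mat_def by simp

lemma nt_mem: "i < m \<Longrightarrow> nt ! i < n \<and> nt ! i \<notin> T"
  using nth_mem[of i nt] nt_set by auto

lemma fc_i: "i < m \<Longrightarrow> is_cycle N (cyc (nt ! i)) \<and> nt ! i \<in> cyc_edges N (cyc (nt ! i))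
    \<and> cyc_edges N (cyc (nt ! i)) \<subseteq> T \<union> {nt ! i}"
  using fc nt_mem unfolding fundamental_cycles_def by auto

definition sg :: "nat \<Rightarrow> real" where "sg i = cyc_sign N (cyc (nt ! i)) (nt ! i)"

lemma sg_sq: "i < m \<Longrightarrow> sg i * sg i = 1"
proof -
  assume i: "i < m"
  have "sg i \<noteq> 0" using fc_i[OF i] unfolding sg_def cyc_edges_def by auto
  moreover have "sg i \<in> {1, -1, 0}" unfolding sg_def cyc_sign_def by auto
  ultimately show ?thesis by auto
qed

lemma C_off: "i < m \<Longrightarrow> i' < m \<Longrightarrow> i' \<noteq> i \<Longrightarrow> C $$ (i', nt ! i) = 0"
proof -
  assume i: "i < m" and i': "i' < m" "i' \<noteq> i"
  have ne: "nt ! i \<noteq> nt ! i'" using nt_dist i i' nth_eq_iff_index_eq by blast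
  have "nt ! i \<notin> cyc_edges N (cyc (nt ! i'))" using fc_i[OF i'(1)] nt_mem[OF i] ne by auto
  then show ?thesis using C_idx[OF i'(1)] nt_mem[OF i] unfolding cyc_edges_def by auto
qed

lemma CT_nt: "z \<in> carrier_vec m \<Longrightarrow> i < m \<Longrightarrow> (transpose_mat C *\<^sub>v z) $ (nt ! i) = sg i * z $ i"
proof -
  assume z: "z \<in> carrier_vec m" and i: "i < m"
  have "(transpose_mat C *\<^sub>v z) $ (nt ! i) = (\<Sum>i'<m. C $$ (i', nt ! i) * z $ i')"
    using mv_index[of "transpose_mat C" n m z "nt ! i"] C_carrier z nt_mem[OF i] by simp
  also have "\<dots> = C $$ (i, nt ! i) * z $ i"
    by (rule sum.mono_neutral_cong_right[where S="{i}", simplified]) (use i C_off[OF i] in auto)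
  also have "\<dots> = sg i * z $ i" unfolding sg_def using C_idx[OF i] nt_mem[OF i] by simp
  finally show ?thesis .
qed

lemma CT_circ:
  assumes y: "y \<in> carrier_vec m"
  shows "(\<Sum>k<n. (transpose_mat C *\<^sub>v y) $ k * (\<phi> (snd (edges N ! k)) - \<phi> (fst (edges N ! k)))) = 0"
proof -
  have "(\<Sum>k<n. (transpose_mat C *\<^sub>v y) $ k * (\<phi> (snd (edges N ! k)) - \<phi> (fst (edges N ! k))))
    = (\<Sum>k<n. \<Sum>i<m. y $ i * (cyc_sign N (cyc (nt ! i)) k * (\<phi> (snd (edges N ! k)) - \<phi> (fst (edges N ! k)))))"
  proof (rule sum.cong[OF refl])
    fix k assume "k \<in> {..<n}"
    then have k: "k < n" by simp
    have "(transpose_mat C *\<^sub>v y) $ k = (\<Sum>i<m. transpose_mat C $$ (k, i) * y $ i)"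
      by (rule mv_index) (use C_carrier y k in auto)
    also have "\<dots> = (\<Sum>i<m. y $ i * cyc_sign N (cyc (nt ! i)) k)"
      by (rule sum.cong[OF refl]) (use C_carrier k C_idx in auto)
    finally show "(transpose_mat C *\<^sub>v y) $ k * (\<phi> (snd (edges N ! k)) - \<phi> (fst (edges N ! k)))
       = (\<Sum>i<m. y $ i * (cyc_sign N (cyc (nt ! i)) k * (\<phi> (snd (edges N ! k)) - \<phi> (fst (edges N ! k)))))"
      by (simp add: sum_distrib_right mult.assoc)
  qed
  also have "\<dots> = (\<Sum>i<m. y $ i * (\<Sum>k<n. cyc_sign N (cyc (nt ! i)) k * (\<phi> (snd (edges N ! k)) - \<phi> (fst (edges N ! k)))))"
    by (subst sum.swap) (simp add: sum_distrib_left)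
  also have "\<dots> = 0"
    by (rule sum.neutral) (use fc_i cyc_ctx.cyc_orth cyc_ctx.intro in auto)
  finally show ?thesis .
qed


lemma Cg0:
  assumes v: "v \<in> carrier_vec n"
  shows "C *\<^sub>v gvec N v = 0\<^sub>v m"
proof (rule eq_vecI)
  show "dim_vec (C *\<^sub>v gvec N v) = dim_vec (0\<^sub>v m :: real vec)" using C_carrier by simp
  fix i assume "i < dim_vec (0\<^sub>v m :: real vec)"
  then have i: "i < m" by simp
  define \<phi> where "\<phi> u = sdiv N v u / real N" for u
  have "(C *\<^sub>v gvec N v) $ i = (\<Sum>k<n. C $$ (i, k) * gvec N v $ k)"
    by (rule mv_index) (use C_carrier i in \<open>auto simp: gvec_def\<close>)
  also have "\<dots> = (\<Sum>k<n. cyc_sign N (cyc (nt ! i)) k * (\<phi> (snd (edges N ! k)) - \<phi> (fst (edges N ! k))))"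
    by (rule sum.cong[OF refl]) (auto simp: C_idx[OF i] gvec_def \<phi>_def diff_divide_distrib)
  also have "\<dots> = 0" using fc_i[OF i] cyc_ctx.cyc_orth cyc_ctx.intro by blast
  finally show "(C *\<^sub>v gvec N v) $ i = 0\<^sub>v m $ i" using i by simp
qed

lemma nocyc: "\<not> (\<exists>vs. is_cycle N vs \<and> cyc_edges N vs \<subseteq> T)"
  using st unfolding spanning_tree_def by auto

definition yv :: "real vec \<Rightarrow> real vec" where
  "yv w = vec m (\<lambda>i. sg i * w $ (nt ! i))"

lemma decomp:
  assumes v: "v \<in> carrier_vec n"
  shows "transpose_mat C *\<^sub>v yv (v - gvec N v) = v - gvec N v"
proof -
  define w where "w = v - gvec N v"
  have wd: "w \<in> carrier_vec n" using v unfolding w_def gvec_def by simp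
  have yd: "yv w \<in> carrier_vec m" unfolding yv_def by simp
  have cd: "transpose_mat C *\<^sub>v yv w \<in> carrier_vec n" using C_carrier yd by simp
  define r where "r k = w $ k - (transpose_mat C *\<^sub>v yv w) $ k" for k
  have circw: "circ N w" unfolding w_def by (rule L5) (use N3 v in auto)
  interpret tree_ctx N T r
  proof
    fix \<phi> :: "nat \<Rightarrow> real"
    have "(\<Sum>k<n. r k * (\<phi> (snd (edges N ! k)) - \<phi> (fst (edges N ! k))))
      = (\<Sum>k<n. w $ k * (\<phi> (snd (edges N ! k)) - \<phi> (fst (edges N ! k))))
        - (\<Sum>k<n. (transpose_mat C *\<^sub>v yv w) $ k * (\<phi> (snd (edges N ! k)) - \<phi> (fst (edges N ! k))))"
      unfolding r_def by (simp add: sum_subtractf left_diff_distrib)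
    also have "\<dots> = 0" using circw CT_circ[OF yd] unfolding circ_def by simp
    finally show "(\<Sum>k<n. r k * (\<phi> (snd (edges N ! k)) - \<phi> (fst (edges N ! k)))) = 0" .
  next
    fix k assume k: "k < n" and rk: "r k \<noteq> 0"
    show "k \<in> T"
    proof (rule ccontr)
      assume "k \<notin> T"
      then have "k \<in> set nt" using nt_set k by auto
      then obtain i where i: "i < m" "nt ! i = k" by (auto simp: in_set_conv_nth)
      have "(transpose_mat C *\<^sub>v yv w) $ k = sg i * (sg i * w $ k)"
        using CT_nt[OF yd i(1)] i unfolding yv_def by simp
      then have "r k = 0" unfolding r_def using sg_sq[OF i(1)] by (simp add: mult.assoc[symmetric])
      then show False using rk by simp
    qed
  qed
  have "\<And>k. k < n \<Longrightarrow> r k = 0" using tree_zero[OF nocyc] by blast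
  then have "transpose_mat C *\<^sub>v yv w = w"
    by (intro eq_vecI) (use wd cd C_carrier in \<open>auto simp: r_def\<close>)
  then show ?thesis unfolding w_def .
qed

lemma kernel0:
  assumes z: "z \<in> carrier_vec m" and Az: "(C * transpose_mat C) *\<^sub>v z = 0\<^sub>v m"
  shows "z = 0\<^sub>v m"
proof -
  define t where "t = transpose_mat C *\<^sub>v z"
  have td: "t \<in> carrier_vec n" unfolding t_def using C_carrier z by simp
  have Ct: "C *\<^sub>v t = 0\<^sub>v m" using Az C_carrier z unfolding t_def by simp
  have tk: "t $ k = (\<Sum>i<m. C $$ (i, k) * z $ i)" if "k < n" for k
  proof -
    have "t $ k = (\<Sum>i<m. transpose_mat C $$ (k, i) * z $ i)"
      unfolding t_def by (rule mv_index) (use C_carrier z that in auto)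
    also have "\<dots> = (\<Sum>i<m. C $$ (i, k) * z $ i)"
      by (rule sum.cong[OF refl]) (use C_carrier that in auto)
    finally show ?thesis .
  qed
  have "0 = (\<Sum>i<m. z $ i * (C *\<^sub>v t) $ i)" using Ct by simp
  also have "\<dots> = (\<Sum>i<m. z $ i * (\<Sum>k<n. C $$ (i, k) * t $ k))"
  proof (rule sum.cong[OF refl])
    fix i assume "i \<in> {..<m}"
    then have "(C *\<^sub>v t) $ i = (\<Sum>k<n. C $$ (i, k) * t $ k)" by (intro mv_index[OF C_carrier td]) simp
    then show "z $ i * (C *\<^sub>v t) $ i = z $ i * (\<Sum>k<n. C $$ (i, k) * t $ k)" by simp
  qed
  also have "\<dots> = (\<Sum>k<n. t $ k * (\<Sum>i<m. C $$ (i, k) * z $ i))"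
  proof -
    have "(\<Sum>i<m. z $ i * (\<Sum>k<n. C $$ (i, k) * t $ k)) = (\<Sum>i<m. \<Sum>k<n. t $ k * (C $$ (i, k) * z $ i))"
      by (simp add: sum_distrib_left algebra_simps)
    also have "\<dots> = (\<Sum>k<n. \<Sum>i<m. t $ k * (C $$ (i, k) * z $ i))" by (rule sum.swap)
    also have "\<dots> = (\<Sum>k<n. t $ k * (\<Sum>i<m. C $$ (i, k) * z $ i))" by (simp add: sum_distrib_left)
    finally show ?thesis .
  qed
  also have "\<dots> = (\<Sum>k<n. t $ k * t $ k)" by (rule sum.cong[OF refl]) (simp add: tk)
  finally have "(\<Sum>k<n. t $ k * t $ k) = 0" by simp
  then have t0: "t $ k = 0" if "k < n" for k
    using sum_nonneg_eq_0_iff[of "{..<n}" "\<lambda>k. t $ k * t $ k"] that by auto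
  show ?thesis
  proof (rule eq_vecI)
    fix i assume "i < dim_vec (0\<^sub>v m :: real vec)"
    then have i: "i < m" by simp
    have "sg i * z $ i = 0" using CT_nt[OF z i] t0[of "nt ! i"] nt_mem[OF i] unfolding t_def by simp
    then have "sg i * (sg i * z $ i) = 0" by simp
    then show "z $ i = 0\<^sub>v m $ i" using sg_sq[OF i] i by (simp add: mult.assoc[symmetric])
  qed (use z in simp)
qed

lemma inv_ex: "\<exists>Mi. mat_inverse (C * transpose_mat C) = Some Mi \<and> Mi * (C * transpose_mat C) = 1\<^sub>m m
   \<and> Mi \<in> carrier_mat m m"
proof -
  have A: "C * transpose_mat C \<in> carrier_mat m m" using C_carrier by simp
  have "Determinant.det (C * transpose_mat C) \<noteq> 0"
    unfolding det_0_iff_vec_prod_zero_field[OF A] using kernel0 by blast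
  from det_non_zero_imp_unit[OF A this] have U: "C * transpose_mat C \<in> Units (ring_mat TYPE(real) m undefined)" .
  then obtain Mi where "mat_inverse (C * transpose_mat C) = Some Mi"
    using mat_inverse(1)[OF A, of undefined] by (cases "mat_inverse (C * transpose_mat C)") auto
  then show ?thesis using mat_inverse(2)[OF A] by blast
qed

lemma lstar_eq:
  assumes v: "v \<in> carrier_vec n"
  shows "(transpose_mat C * the (mat_inverse (C * transpose_mat C)) * C) *\<^sub>v v = v - gvec N v"
proof -
  obtain Mi where Mi: "mat_inverse (C * transpose_mat C) = Some Mi" "Mi * (C * transpose_mat C) = 1\<^sub>m m"
    "Mi \<in> carrier_mat m m" using inv_ex by blast
  define w where "w = v - gvec N v"
  have gd: "gvec N v \<in> carrier_vec n" unfolding gvec_def by simp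
  have wd: "w \<in> carrier_vec n" using v unfolding w_def gvec_def by simp
  have yd: "yv w \<in> carrier_vec m" unfolding yv_def by simp
  have CT: "transpose_mat C \<in> carrier_mat n m" using C_carrier by simp
  have vw: "v = w + gvec N v" unfolding w_def using v gd by (intro eq_vecI) auto
  have A: "C * transpose_mat C \<in> carrier_mat m m" using C_carrier by simp
  have "C *\<^sub>v v = C *\<^sub>v w + C *\<^sub>v gvec N v"
    by (subst vw, rule mult_add_distrib_mat_vec[OF C_carrier wd gd])
  also have "\<dots> = C *\<^sub>v w" unfolding Cg0[OF v] by (rule eq_vecI) (use C_carrier wd in auto)
  also have "\<dots> = (C * transpose_mat C) *\<^sub>v yv w"
    by (subst assoc_mult_mat_vec[OF C_carrier CT yd]) (use decomp[OF v] in \<open>simp only: w_def\<close>)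
  finally have Cv: "C *\<^sub>v v = (C * transpose_mat C) *\<^sub>v yv w" .
  have "(transpose_mat C * Mi * C) *\<^sub>v v = transpose_mat C *\<^sub>v (Mi *\<^sub>v (C *\<^sub>v v))"
  proof -
    have a: "transpose_mat C * Mi \<in> carrier_mat n m" using CT Mi(3) by simp
    have "(transpose_mat C * Mi * C) *\<^sub>v v = (transpose_mat C * Mi) *\<^sub>v (C *\<^sub>v v)"
      by (rule assoc_mult_mat_vec[OF a C_carrier v])
    also have "\<dots> = transpose_mat C *\<^sub>v (Mi *\<^sub>v (C *\<^sub>v v))"
      by (rule assoc_mult_mat_vec[OF CT Mi(3)]) (use C_carrier v in simp)
    finally show ?thesis .
  qed
  also have "Mi *\<^sub>v (C *\<^sub>v v) = yv w"
    unfolding Cv assoc_mult_mat_vec[symmetric, OF Mi(3) A yd] Mi(2) using yd by simp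
  also have "transpose_mat C *\<^sub>v yv w = w" using decomp[OF v] unfolding w_def .
  finally show ?thesis unfolding w_def Mi(1) by simp
qed
end

lemma lbar_idx: "k < nE N \<Longrightarrow> lbar N x $ k = crep (x (snd (edges N ! k)) - x (fst (edges N ! k)))"
  unfolding lbar_def by simp

lemma sdiv_lbar:
  assumes u: "u < N"
  shows "sdiv N (lbar N x) u = (\<Sum>c\<in>{0..<N}-{u}. rho (c < u) (x u) (x c))"
proof -
  let ?f = "\<lambda>a b. crep (x b - x a)"
  have "sdiv N (lbar N x) u = (\<Sum>k<nE N. (\<lambda>q. ?f (fst q) (snd q) *
      ((if snd q = u then 1 else 0) - (if fst q = u then 1 else 0))) (edges N ! k))"
    unfolding sdiv_def inc_def by (rule sum.cong[OF refl]) (simp add: lbar_idx)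
  also have "\<dots> = (\<Sum>b<N. \<Sum>a<b. ?f a b * ((if b = u then 1 else 0) - (if a = u then 1 else 0)))"
    using sum_edges_pairs[where N=N and G="\<lambda>q. ?f (fst q) (snd q) * ((if snd q = u then 1 else 0) - (if fst q = u then 1 else 0))"] by simp
  also have "\<dots> = (\<Sum>b<N. \<Sum>a<b. (if b = u then ?f a b else 0)) - (\<Sum>b<N. \<Sum>a<b. (if a = u then ?f a b else 0))"
    by (simp only: sum_subtractf[symmetric]) (rule sum.cong[OF refl], rule sum.cong[OF refl], subst mult.commute, rule ifmul)
  also have "(\<Sum>b<N. \<Sum>a<b. (if b = u then ?f a b else 0)) = (\<Sum>b<N. if b = u then (\<Sum>a<b. ?f a b) else 0)"
    by (rule sum.cong[OF refl]) auto
  also have "\<dots> = (\<Sum>a<u. ?f a u)" using u by simp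
  also have "(\<Sum>b<N. \<Sum>a<b. (if a = u then ?f a b else 0)) = (\<Sum>b<N. if u < b then ?f u b else 0)"
    by (rule sum.cong[OF refl]) (simp add: sum.delta)
  also have "\<dots> = (\<Sum>b\<in>{u<..<N}. ?f u b)"
    by (simp add: sum.If_cases) (rule sum.cong, auto)
  finally have 1: "sdiv N (lbar N x) u = (\<Sum>a<u. ?f a u) - (\<Sum>b\<in>{u<..<N}. ?f u b)" .
  have e: "{0..<N}-{u} = {..<u} \<union> {u<..<N}" using u by auto
  have "(\<Sum>c\<in>{0..<N}-{u}. rho (c < u) (x u) (x c)) = (\<Sum>c<u. rho (c < u) (x u) (x c)) + (\<Sum>c\<in>{u<..<N}. rho (c < u) (x u) (x c))"
    unfolding e by (rule sum.union_disjoint) auto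
  also have "(\<Sum>c<u. rho (c < u) (x u) (x c)) = (\<Sum>a<u. ?f a u)"
    by (rule sum.cong[OF refl]) (simp add: rho_def)
  also have "(\<Sum>c\<in>{u<..<N}. rho (c < u) (x u) (x c)) = - (\<Sum>b\<in>{u<..<N}. ?f u b)"
    by (simp add: rho_def sum_negf[symmetric])
  finally show ?thesis unfolding 1 by simp
qed

lemma sdiv_diff:
  assumes ab: "a < b" "b < N"
  shows "sdiv N (lbar N x) b - sdiv N (lbar N x) a = 2 * crep (x b - x a) + (\<Sum>c\<in>{0..<N}-{a,b}. Tc a b c x)"
proof -
  have a: "a < N" using ab by simp
  have eb: "{0..<N}-{b} = insert a ({0..<N}-{a,b})" using ab by auto
  have ea: "{0..<N}-{a} = insert b ({0..<N}-{a,b})" using ab by auto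
  have "sdiv N (lbar N x) b = rho True (x b) (x a) + (\<Sum>c\<in>{0..<N}-{a,b}. rho (c < b) (x b) (x c))"
    unfolding sdiv_lbar[OF ab(2)] eb using ab by (subst sum.insert) auto
  moreover have "sdiv N (lbar N x) a = rho False (x a) (x b) + (\<Sum>c\<in>{0..<N}-{a,b}. rho (c < a) (x a) (x c))"
    unfolding sdiv_lbar[OF a] ea using ab by (subst sum.insert) auto
  ultimately show ?thesis unfolding Tc_def sum_subtractf by (simp add: rho_def)
qed

context net
begin

lemma dl_formula:
  assumes k: "k < n"
  shows "dl N T cyc x k = - (2 * crep (x (snd (edges N ! k)) - x (fst (edges N ! k)))
      + (\<Sum>c\<in>{0..<N}-{fst (edges N ! k), snd (edges N ! k)}. Tc (fst (edges N ! k)) (snd (edges N ! k)) c x)) / real N"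
proof -
  have v: "lbar N x \<in> carrier_vec n" unfolding lbar_def by simp
  have "lstar N T cyc x = lbar N x - gvec N (lbar N x)"
    unfolding lstar_def Let_def by (rule lstar_eq[OF v])
  then have "dl N T cyc x k = - gvec N (lbar N x) $ k"
  proof -
    have gd: "dim_vec (gvec N (lbar N x)) = n" unfolding gvec_def by simp
    show ?thesis unfolding dl_def using k v gd \<open>lstar N T cyc x = _\<close> by simp
  qed
  also have "\<dots> = - (sdiv N (lbar N x) (snd (edges N ! k)) - sdiv N (lbar N x) (fst (edges N ! k))) / real N"
    unfolding gvec_def using k by (simp add: minus_divide_left)
  finally show ?thesis using sdiv_diff[of "fst (edges N ! k)" "snd (edges N ! k)" N x] edge_nth[OF k] by simp
qed

end

context net
begin

lemma n_pos: "0 < n"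
proof -
  have "(0, 1) \<in> set (edges N)" unfolding set_edges using N3 by auto
  then show ?thesis unfolding nE_def by (cases "edges N") auto
qed

lemma perk_meas:
  assumes k: "k < n"
  shows "(\<lambda>x. lbar N x $ k) \<in> borel_measurable (pos_space N)"
    "(\<lambda>x. dl N T cyc x k) \<in> borel_measurable (pos_space N)"
    "\<bar>dl N T cyc x k\<bar> \<le> 1" "\<bar>lbar N x $ k\<bar> \<le> 1/2"
proof -
  obtain a b where e: "edges N ! k = (a, b)" by (cases "edges N ! k")
  have ab: "a < b" "b < N" using edge_nth[OF k] e by auto
  have a: "a < N" using ab by simp
  let ?S = "\<lambda>x. \<Sum>c\<in>{0..<N}-{a,b}. Tc a b c x"
  have Yf: "(\<lambda>x. lbar N x $ k) = (\<lambda>x. crep (x b - x a))"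
    by (rule ext) (simp add: lbar_idx[OF k] e)
  have dlf: "(\<lambda>x. dl N T cyc x k) = (\<lambda>x. - (2 * crep (x b - x a) + ?S x) / real N)"
    by (rule ext) (simp add: dl_formula[OF k] e)
  have Ym: "(\<lambda>x. crep (x b - x a)) \<in> borel_measurable (pos_space N)"
    by (intro measurable_compose[OF _ crep_measurable] borel_measurable_diff comp_meas a ab)
  show "(\<lambda>x. lbar N x $ k) \<in> borel_measurable (pos_space N)" unfolding Yf by (rule Ym)
  have Sm: "?S \<in> borel_measurable (pos_space N)"
    by (intro borel_measurable_sum Tc_meas) (use ab in auto)
  show "(\<lambda>x. dl N T cyc x k) \<in> borel_measurable (pos_space N)" unfolding dlf
    by (intro borel_measurable_divide borel_measurable_uminus borel_measurable_add borel_measurable_times borel_measurable_const Ym Sm)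
  have Yx: "lbar N x $ k = crep (x b - x a)" by (simp add: lbar_idx[OF k] e)
  show "\<bar>lbar N x $ k\<bar> \<le> 1/2" using crep_bounds[of "x b - x a"] unfolding Yx by linarith
  have cC: "card ({0..<N}-{a,b}) = N - 2"
  proof -
    have "card ({0..<N}-{a,b}) = card {0..<N} - card {a,b}" by (rule card_Diff_subset) (use ab in auto)
    moreover have "card {a, b} = 2" using ab by simp
    ultimately show ?thesis by simp
  qed
  have s1: "\<bar>?S x\<bar> \<le> (\<Sum>c\<in>{0..<N}-{a,b}. \<bar>Tc a b c x\<bar>)" by (rule sum_abs)
  have s2: "(\<Sum>c\<in>{0..<N}-{a,b}. \<bar>Tc a b c x\<bar>) \<le> (\<Sum>c\<in>{0..<N}-{a,b}. 1)" by (rule sum_mono) (rule Tc_bound)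
  have s3: "(\<Sum>c\<in>{0..<N}-{a,b}. (1::real)) = real (N - 2)" using cC by simp
  have Sb: "\<bar>?S x\<bar> \<le> real (N - 2)" using s1 s2 s3 by linarith
  define X where "X = 2 * crep (x b - x a) + ?S x"
  have t1: "\<bar>X\<bar> \<le> \<bar>2 * crep (x b - x a)\<bar> + \<bar>?S x\<bar>" unfolding X_def by (rule abs_triangle_ineq)
  have t2: "\<bar>2 * crep (x b - x a)\<bar> \<le> 1" using crep_bounds[of "x b - x a"] by (simp add: abs_le_iff)
  have t3: "real (N - 2) = real N - 2" using N3 by (simp add: of_nat_diff)
  have Xb: "\<bar>X\<bar> \<le> real N" using t1 t2 t3 Sb by linarith
  have Np: "0 < real N" using N3 by simp
  have "\<bar>- X / real N\<bar> = \<bar>X\<bar> / real N" using Np by (simp add: abs_divide)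
  also have "\<dots> \<le> 1" using Xb Np by (simp add: divide_le_eq_1_pos)
  finally have "\<bar>- X / real N\<bar> \<le> 1" .
  moreover have "dl N T cyc x k = - X / real N" unfolding X_def by (simp add: dl_formula[OF k] e)
  ultimately show "\<bar>dl N T cyc x k\<bar> \<le> 1" by simp
qed

lemma ph_bound: "\<bar>y\<bar> \<le> 1/2 \<Longrightarrow> \<bar>(real N - 2) / real N * y - y\<bar> \<le> 1"
proof -
  assume y: "\<bar>y\<bar> \<le> 1/2"
  have q: "0 \<le> (real N - 2) / real N" "(real N - 2) / real N \<le> 1" using N3 by auto
  have "\<bar>(real N - 2) / real N * y\<bar> \<le> 1 * (1/2)" unfolding abs_mult
    using q y by (intro mult_mono) auto
  then show ?thesis using y by linarith
qed

lemma ps_bound: "\<bar>y\<bar> \<le> 1/2 \<Longrightarrow> \<bar>(real N - 2) / (real N)\<^sup>2 * (\<bar>y\<bar> - y\<^sup>2)\<bar> \<le> 1"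
proof -
  assume y: "\<bar>y\<bar> \<le> 1/2"
  have q: "0 \<le> (real N - 2) / (real N)\<^sup>2" "(real N - 2) / (real N)\<^sup>2 \<le> 1"
  proof -
    show "0 \<le> (real N - 2) / (real N)\<^sup>2" using N3 by auto
    have "real N * 1 \<le> real N * real N" using N3 by (intro mult_left_mono) auto
    then have "real N - 2 \<le> (real N)\<^sup>2" by (simp add: power2_eq_square)
    then show "(real N - 2) / (real N)\<^sup>2 \<le> 1" using N3 by (simp add: divide_le_eq_1)
  qed
  have h: "0 \<le> \<bar>y\<bar> - y\<^sup>2" "\<bar>y\<bar> - y\<^sup>2 \<le> 1"
  proof -
    have "y\<^sup>2 = \<bar>y\<bar> * \<bar>y\<bar>" by (simp add: power2_eq_square abs_mult[symmetric])
    moreover have "\<bar>y\<bar> * \<bar>y\<bar> \<le> \<bar>y\<bar>" using y by (intro mult_left_le) auto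
    moreover have "0 \<le> \<bar>y\<bar> * \<bar>y\<bar>" by simp
    ultimately show "0 \<le> \<bar>y\<bar> - y\<^sup>2" "\<bar>y\<bar> - y\<^sup>2 \<le> 1" using y by linarith+
  qed
  have "\<bar>(real N - 2) / (real N)\<^sup>2 * (\<bar>y\<bar> - y\<^sup>2)\<bar> \<le> 1 * 1" unfolding abs_mult
    using q h by (intro mult_mono) auto
  then show ?thesis by simp
qed


lemma perk:
  assumes k: "k < n" and B: "B \<in> sets borel"
  shows "(\<integral>x. indicator B (lbar N x $ k) * dl N T cyc x k \<partial>pos_space N)
       = (\<integral>x. indicator B (lbar N x $ k) * ((real N - 2) / real N * lbar N x $ k - lbar N x $ k) \<partial>pos_space N)"
    "(\<integral>x. indicator B (lbar N x $ k) * (dl N T cyc x k - ((real N - 2) / real N * lbar N x $ k - lbar N x $ k))\<^sup>2 \<partial>pos_space N)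
       = (\<integral>x. indicator B (lbar N x $ k) * ((real N - 2) / (real N)\<^sup>2 * (\<bar>lbar N x $ k\<bar> - (lbar N x $ k)\<^sup>2)) \<partial>pos_space N)"
proof -
  obtain a b where e: "edges N ! k = (a, b)" by (cases "edges N ! k")
  have ab: "a < b" "b < N" using edge_nth[OF k] e by auto
  have a: "a < N" using ab by simp
  let ?S = "\<lambda>x. \<Sum>c\<in>{0..<N}-{a,b}. Tc a b c x"
  let ?Y = "\<lambda>x. crep (x b - x a)"
  let ?I = "\<lambda>x. indicator B (crep (x b - x a)) :: real"
  have Yx: "lbar N x $ k = ?Y x" for x by (simp add: lbar_idx[OF k] e)
  have dx: "dl N T cyc x k = - (2 * ?Y x + ?S x) / real N" for x by (simp add: dl_formula[OF k] e)
  have Np: "0 < real N" using N3 by simp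
  have Ym: "?Y \<in> borel_measurable (pos_space N)"
    by (intro measurable_compose[OF _ crep_measurable] borel_measurable_diff comp_meas a ab)
  have Sm: "?S \<in> borel_measurable (pos_space N)"
    by (intro borel_measurable_sum Tc_meas) (use ab in auto)
  have Im: "?I \<in> borel_measurable (pos_space N)" by (rule ind_meas[OF a ab(2) B])
  have Sb: "\<bar>?S x\<bar> \<le> real N" for x
  proof -
    have "\<bar>?S x\<bar> \<le> (\<Sum>c\<in>{0..<N}-{a,b}. \<bar>Tc a b c x\<bar>)" by (rule sum_abs)
    also have "\<dots> \<le> (\<Sum>c\<in>{0..<N}-{a,b}. 1)" by (rule sum_mono) (rule Tc_bound)
    also have "\<dots> \<le> (\<Sum>c\<in>{0..<N}. 1)" by (rule sum_mono2) auto
    finally show ?thesis by simp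
  qed
  have i1: "integrable (pos_space N) (\<lambda>x. ?I x * ((real N - 2) / real N * ?Y x - ?Y x))"
  proof (rule bounded_integrable[OF prob_pos _, where K=1])
    show "(\<lambda>x. ?I x * ((real N - 2) / real N * ?Y x - ?Y x)) \<in> borel_measurable (pos_space N)"
      using Im Ym by measurable
    fix x have "\<bar>?Y x\<bar> \<le> 1/2" using crep_bounds[of "x b - x a"] by linarith
    then show "\<bar>?I x * ((real N - 2) / real N * ?Y x - ?Y x)\<bar> \<le> 1"
      using ph_bound by (auto simp: indicator_def)
  qed
  have i2: "integrable (pos_space N) (\<lambda>x. ?I x * ?S x)"
  proof (rule bounded_integrable[OF prob_pos _, where K="real N"])
    show "(\<lambda>x. ?I x * ?S x) \<in> borel_measurable (pos_space N)" using Im Sm by measurable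
    fix x show "\<bar>?I x * ?S x\<bar> \<le> real N" using Sb[of x] by (auto simp: indicator_def)
  qed
  have pw1: "?I x * (- (2 * ?Y x + ?S x) / real N) = ?I x * ((real N - 2) / real N * ?Y x - ?Y x) - (1 / real N) * (?I x * ?S x)" for x
    using Np by (simp add: field_simps)
  have "(\<integral>x. indicator B (lbar N x $ k) * dl N T cyc x k \<partial>pos_space N)
      = (\<integral>x. ?I x * ((real N - 2) / real N * ?Y x - ?Y x) - (1 / real N) * (?I x * ?S x) \<partial>pos_space N)"
    unfolding Yx dx pw1 ..
  also have "\<dots> = (\<integral>x. ?I x * ((real N - 2) / real N * ?Y x - ?Y x) \<partial>pos_space N) - (1 / real N) * (\<integral>x. ?I x * ?S x \<partial>pos_space N)"
    using i1 i2 by simp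
  also have "(\<integral>x. ?I x * ?S x \<partial>pos_space N) = 0" by (rule edge_identities(1)[OF ab B])
  finally show "(\<integral>x. indicator B (lbar N x $ k) * dl N T cyc x k \<partial>pos_space N)
       = (\<integral>x. indicator B (lbar N x $ k) * ((real N - 2) / real N * lbar N x $ k - lbar N x $ k) \<partial>pos_space N)"
    unfolding Yx by simp
  have pw2: "?I x * (- (2 * ?Y x + ?S x) / real N - ((real N - 2) / real N * ?Y x - ?Y x))\<^sup>2
      = (1 / (real N)\<^sup>2) * (?I x * (?S x)\<^sup>2)" for x
    using Np by (simp add: field_simps power2_eq_square)
  have pw3: "?I x * ((real N - 2) / (real N)\<^sup>2 * (\<bar>?Y x\<bar> - (?Y x)\<^sup>2))
      = ((real N - 2) / (real N)\<^sup>2) * (?I x * (\<bar>?Y x\<bar> - (?Y x)\<^sup>2))" for x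
    by simp
  show "(\<integral>x. indicator B (lbar N x $ k) * (dl N T cyc x k - ((real N - 2) / real N * lbar N x $ k - lbar N x $ k))\<^sup>2 \<partial>pos_space N)
       = (\<integral>x. indicator B (lbar N x $ k) * ((real N - 2) / (real N)\<^sup>2 * (\<bar>lbar N x $ k\<bar> - (lbar N x $ k)\<^sup>2)) \<partial>pos_space N)"
    unfolding Yx dx pw2 pw3 integral_mult_right_zero edge_identities(2)[OF ab B] by simp
qed

lemma edge_avg:
  fixes G :: "(nat \<Rightarrow> real) \<Rightarrow> nat \<Rightarrow> real"
  assumes Gm: "\<And>i. i < n \<Longrightarrow> (\<lambda>x. G x i) \<in> borel_measurable (pos_space N)"
    and Gb: "\<And>i x. i < n \<Longrightarrow> \<bar>G x i\<bar> \<le> K"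
  shows "(\<lambda>(x, i). G x i) \<in> borel_measurable (pos_edge_space N)"
    "integral\<^sup>L (pos_edge_space N) (\<lambda>(x, i). G x i) = (\<Sum>i\<in>{0..<n}. (\<integral>x. G x i \<partial>pos_space N)) / real n"
proof -
  have pU: "prob_space (uniform_count_measure {0..<n})"
    by (rule prob_space_uniform_count_measure) (use n_pos in auto)
  interpret pair_prob_space "pos_space N" "uniform_count_measure {0..<n}"
    by (intro pair_prob_space.intro pair_sigma_finite.intro prob_space_imp_sigma_finite prob_pos pU)
      (intro_locales; simp add: prob_space_def[symmetric] prob_pos pU prob_space_imp_sigma_finite)?
  have sndm: "snd \<in> measurable (pos_edge_space N) (count_space {0..<n})"
  proof -
    have "snd \<in> measurable (pos_edge_space N) (uniform_count_measure {0..<n})"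
      unfolding pos_edge_space_def by (rule measurable_snd)
    moreover have "measurable (pos_edge_space N) (uniform_count_measure {0..<n}) = measurable (pos_edge_space N) (count_space {0..<n})"
      by (rule measurable_cong_sets) (auto simp: sets_uniform_count_measure_count_space)
    ultimately show ?thesis by simp
  qed
  have m: "(\<lambda>\<omega>. G (fst \<omega>) (snd \<omega>)) \<in> borel_measurable (pos_edge_space N)"
  proof (rule measurable_compose_countable'[OF _ sndm])
    fix i assume "i \<in> {0..<n}"
    then show "(\<lambda>\<omega>. G (fst \<omega>) i) \<in> borel_measurable (pos_edge_space N)"
      unfolding pos_edge_space_def by (intro measurable_compose[OF measurable_fst Gm]) auto
  qed auto
  show mm: "(\<lambda>(x, i). G x i) \<in> borel_measurable (pos_edge_space N)" using m by (simp add: case_prod_beta)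
  have int: "integrable (pos_space N \<Otimes>\<^sub>M uniform_count_measure {0..<n}) (\<lambda>(x, i). G x i)"
  proof (rule integrable_const_bound[where B=K])
    show "(\<lambda>(x, i). G x i) \<in> borel_measurable (pos_space N \<Otimes>\<^sub>M uniform_count_measure {0..<n})"
      using mm unfolding pos_edge_space_def .
    show "AE \<omega> in pos_space N \<Otimes>\<^sub>M uniform_count_measure {0..<n}. norm ((\<lambda>(x, i). G x i) \<omega>) \<le> K"
      by (rule AE_I2) (auto simp: space_pair_measure space_uniform_count_measure Gb)
  qed
  have "integral\<^sup>L (pos_edge_space N) (\<lambda>(x, i). G x i)
     = (\<integral>i. (\<integral>x. G x i \<partial>pos_space N) \<partial>uniform_count_measure {0..<n})"
    unfolding pos_edge_space_def using integral_snd[OF int] by simp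
  also have "\<dots> = (\<Sum>i\<in>{0..<n}. (\<integral>x. G x i \<partial>pos_space N)) / real n"
    by (simp add: integral_uniform_count_measure)
  finally show "integral\<^sup>L (pos_edge_space N) (\<lambda>(x, i). G x i) = (\<Sum>i\<in>{0..<n}. (\<integral>x. G x i \<partial>pos_space N)) / real n" .
qed


lemma edge_eq:
  fixes G1 G2 :: "(nat \<Rightarrow> real) \<Rightarrow> nat \<Rightarrow> real"
  assumes m1: "\<And>i. i < n \<Longrightarrow> (\<lambda>x. G1 x i) \<in> borel_measurable (pos_space N)"
    and m2: "\<And>i. i < n \<Longrightarrow> (\<lambda>x. G2 x i) \<in> borel_measurable (pos_space N)"
    and b1: "\<And>i x. i < n \<Longrightarrow> \<bar>G1 x i\<bar> \<le> K"
    and b2: "\<And>i x. i < n \<Longrightarrow> \<bar>G2 x i\<bar> \<le> K"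
    and e: "\<And>i. i < n \<Longrightarrow> (\<integral>x. G1 x i \<partial>pos_space N) = (\<integral>x. G2 x i \<partial>pos_space N)"
  shows "integral\<^sup>L (pos_edge_space N) (\<lambda>(x, i). G1 x i) = integral\<^sup>L (pos_edge_space N) (\<lambda>(x, i). G2 x i)"
proof -
  have "(\<Sum>i\<in>{0..<n}. (\<integral>x. G1 x i \<partial>pos_space N)) = (\<Sum>i\<in>{0..<n}. (\<integral>x. G2 x i \<partial>pos_space N))"
    by (rule sum.cong[OF refl]) (simp add: e)
  then show ?thesis using edge_avg(2)[OF m1 b1] edge_avg(2)[OF m2 b2] by simp
qed

lemma ind_lbar_meas: "k < n \<Longrightarrow> B \<in> sets borel \<Longrightarrow> (\<lambda>x. indicator B (lbar N x $ k) :: real) \<in> borel_measurable (pos_space N)"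
  by (rule measurable_compose[OF perk_meas(1) borel_measurable_indicator]) auto

end

theorem mainTheorem6:
  fixes N :: nat and T :: "nat set" and cyc :: "nat \<Rightarrow> nat list"
  assumes "N \<ge> 3"
    and "spanning_tree N T"
    and "fundamental_cycles N T cyc"
  shows "(\<forall>k<nE N.
            (AE x in pos_space N.
               real_cond_exp (pos_space N)
                 (vimage_algebra (space (pos_space N)) (\<lambda>x. lbar N x $ k) borel)
                 (\<lambda>x. dl N T cyc x k) x
               = (real N - 2) / real N * (lbar N x $ k) - lbar N x $ k)
          \<and> (AE x in pos_space N.
               cond_var (pos_space N)
                 (vimage_algebra (space (pos_space N)) (\<lambda>x. lbar N x $ k) borel)
                 (\<lambda>x. dl N T cyc x k) x
               = (real N - 2) / (real N)\<^sup>2 * (\<bar>lbar N x $ k\<bar> - (lbar N x $ k)\<^sup>2)))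
       \<and> (AE \<omega> in pos_edge_space N.
            cond_var (pos_edge_space N)
              (vimage_algebra (space (pos_edge_space N)) (\<lambda>(x, i). lbar N x $ i) borel)
              (\<lambda>(x, i). dl N T cyc x i) \<omega>
            = (real N - 2) / (real N)\<^sup>2 *
                (\<bar>(\<lambda>(x, i). lbar N x $ i) \<omega>\<bar> - ((\<lambda>(x, i). lbar N x $ i) \<omega>)\<^sup>2))"
proof -
  interpret net N T cyc by unfold_locales (rule assms)+
  have phm: "(\<lambda>y. (real N - 2) / real N * y - y) \<in> borel_measurable borel" by measurable
  have psm: "(\<lambda>y. (real N - 2) / (real N)\<^sup>2 * (\<bar>y\<bar> - y\<^sup>2)) \<in> borel_measurable borel" by measurable
  have A: "\<forall>k<nE N.
            (AE x in pos_space N.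
               real_cond_exp (pos_space N)
                 (vimage_algebra (space (pos_space N)) (\<lambda>x. lbar N x $ k) borel)
                 (\<lambda>x. dl N T cyc x k) x
               = (real N - 2) / real N * (lbar N x $ k) - lbar N x $ k)
          \<and> (AE x in pos_space N.
               cond_var (pos_space N)
                 (vimage_algebra (space (pos_space N)) (\<lambda>x. lbar N x $ k) borel)
                 (\<lambda>x. dl N T cyc x k) x
               = (real N - 2) / (real N)\<^sup>2 * (\<bar>lbar N x $ k\<bar> - (lbar N x $ k)\<^sup>2))"
  proof (intro allI impI conjI)
    fix k assume k: "k < nE N"
    show "AE x in pos_space N.
               real_cond_exp (pos_space N)
                 (vimage_algebra (space (pos_space N)) (\<lambda>x. lbar N x $ k) borel)
                 (\<lambda>x. dl N T cyc x k) x
               = (real N - 2) / real N * (lbar N x $ k) - lbar N x $ k"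
      by (rule condexp_via[where M="pos_space N" and Y="\<lambda>x. lbar N x $ k" and f="\<lambda>x. dl N T cyc x k"
            and \<phi>="\<lambda>y. (real N - 2) / real N * y - y" and K=1, OF prob_pos perk_meas(1)[OF k] perk_meas(2)[OF k]
            perk_meas(3)[OF k] phm ph_bound[OF perk_meas(4)[OF k]] perk(1)[OF k]])
    show "AE x in pos_space N.
               cond_var (pos_space N)
                 (vimage_algebra (space (pos_space N)) (\<lambda>x. lbar N x $ k) borel)
                 (\<lambda>x. dl N T cyc x k) x
               = (real N - 2) / (real N)\<^sup>2 * (\<bar>lbar N x $ k\<bar> - (lbar N x $ k)\<^sup>2)"
      by (rule condvar_via[where M="pos_space N" and Y="\<lambda>x. lbar N x $ k" and f="\<lambda>x. dl N T cyc x k"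
            and \<phi>="\<lambda>y. (real N - 2) / real N * y - y" and K=1
            and \<psi>="\<lambda>y. (real N - 2) / (real N)\<^sup>2 * (\<bar>y\<bar> - y\<^sup>2)" and ?K2.0=1,
            OF prob_pos perk_meas(1)[OF k] perk_meas(2)[OF k]
            perk_meas(3)[OF k] phm ph_bound[OF perk_meas(4)[OF k]] psm ps_bound[OF perk_meas(4)[OF k]]
            perk(1)[OF k] perk(2)[OF k]])
  qed
  have pU: "prob_space (uniform_count_measure {0..<n})"
    by (rule prob_space_uniform_count_measure) (use n_pos in auto)
  have PE: "prob_space (pos_edge_space N)" unfolding pos_edge_space_def by (rule prob_space_pair[OF prob_pos pU])
  have spE: "\<omega> \<in> space (pos_edge_space N) \<Longrightarrow> snd \<omega> < n" for \<omega>
    unfolding pos_edge_space_def by (auto simp: space_pair_measure space_uniform_count_measure)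
  have Ym: "(\<lambda>(x, i). lbar N x $ i) \<in> borel_measurable (pos_edge_space N)"
    by (rule edge_avg(1)[where K="1/2", OF perk_meas(1) perk_meas(4)])
  have fm: "(\<lambda>(x, i). dl N T cyc x i) \<in> borel_measurable (pos_edge_space N)"
    by (rule edge_avg(1)[where K=1, OF perk_meas(2) perk_meas(3)])
  have B: "AE \<omega> in pos_edge_space N.
            cond_var (pos_edge_space N)
              (vimage_algebra (space (pos_edge_space N)) (\<lambda>(x, i). lbar N x $ i) borel)
              (\<lambda>(x, i). dl N T cyc x i) \<omega>
            = (real N - 2) / (real N)\<^sup>2 *
                (\<bar>(\<lambda>(x, i). lbar N x $ i) \<omega>\<bar> - ((\<lambda>(x, i). lbar N x $ i) \<omega>)\<^sup>2)"
  proof (rule condvar_via[where M="pos_edge_space N" and Y="\<lambda>(x, i). lbar N x $ i" and f="\<lambda>(x, i). dl N T cyc x i"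
            and \<phi>="\<lambda>y. (real N - 2) / real N * y - y" and K=1
            and \<psi>="\<lambda>y. (real N - 2) / (real N)\<^sup>2 * (\<bar>y\<bar> - y\<^sup>2)" and ?K2.0=1, OF PE Ym fm _ phm _ psm])
    fix \<omega> assume w: "\<omega> \<in> space (pos_edge_space N)"
    obtain x i where o: "\<omega> = (x, i)" by (cases \<omega>)
    have i: "i < n" using spE[OF w] o by simp
    show "\<bar>(\<lambda>(x, i). dl N T cyc x i) \<omega>\<bar> \<le> 1" using perk_meas(3)[OF i] o by simp
    show "\<bar>(real N - 2) / real N * (\<lambda>(x, i). lbar N x $ i) \<omega> - (\<lambda>(x, i). lbar N x $ i) \<omega>\<bar> \<le> 1"
      using ph_bound[OF perk_meas(4)[OF i]] o by simp
    show "\<bar>(real N - 2) / (real N)\<^sup>2 * (\<bar>(\<lambda>(x, i). lbar N x $ i) \<omega>\<bar> - ((\<lambda>(x, i). lbar N x $ i) \<omega>)\<^sup>2)\<bar> \<le> 1"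
      using ps_bound[OF perk_meas(4)[OF i]] o by simp
  next
    fix B :: "real set" assume Bb: "B \<in> sets borel"
    have e1: "(\<lambda>\<omega>. indicator B ((\<lambda>(x, i). lbar N x $ i) \<omega>) * (\<lambda>(x, i). dl N T cyc x i) \<omega>)
       = (\<lambda>(x, i). indicator B (lbar N x $ i) * dl N T cyc x i)" by (rule ext) (simp add: case_prod_beta)
    have e2: "(\<lambda>\<omega>. indicator B ((\<lambda>(x, i). lbar N x $ i) \<omega>) * ((real N - 2) / real N * (\<lambda>(x, i). lbar N x $ i) \<omega> - (\<lambda>(x, i). lbar N x $ i) \<omega>))
       = (\<lambda>(x, i). indicator B (lbar N x $ i) * ((real N - 2) / real N * lbar N x $ i - lbar N x $ i))"
      by (rule ext) (simp add: case_prod_beta)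
    show "(\<integral>\<omega>. indicator B ((\<lambda>(x, i). lbar N x $ i) \<omega>) * (\<lambda>(x, i). dl N T cyc x i) \<omega> \<partial>pos_edge_space N)
       = (\<integral>\<omega>. indicator B ((\<lambda>(x, i). lbar N x $ i) \<omega>) * ((real N - 2) / real N * (\<lambda>(x, i). lbar N x $ i) \<omega> - (\<lambda>(x, i). lbar N x $ i) \<omega>) \<partial>pos_edge_space N)"
      unfolding e1 e2
    proof (rule edge_eq[where K=1])
      fix i assume i: "i < n"
      show "(\<lambda>x. indicator B (lbar N x $ i) * dl N T cyc x i) \<in> borel_measurable (pos_space N)"
        using ind_lbar_meas[OF i Bb] perk_meas(2)[OF i] by (rule borel_measurable_times)
      show "(\<lambda>x. indicator B (lbar N x $ i) * ((real N - 2) / real N * lbar N x $ i - lbar N x $ i)) \<in> borel_measurable (pos_space N)"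
        using ind_lbar_meas[OF i Bb] perk_meas(1)[OF i] by measurable
      fix x
      show "\<bar>indicator B (lbar N x $ i) * dl N T cyc x i\<bar> \<le> 1"
        using perk_meas(3)[OF i, of x] by (auto simp: indicator_def)
      show "\<bar>indicator B (lbar N x $ i) * ((real N - 2) / real N * lbar N x $ i - lbar N x $ i)\<bar> \<le> 1"
        using ph_bound[OF perk_meas(4)[OF i, of x]] by (auto simp: indicator_def)
    next
      fix i assume i: "i < n"
      show "(\<integral>x. indicator B (lbar N x $ i) * dl N T cyc x i \<partial>pos_space N)
        = (\<integral>x. indicator B (lbar N x $ i) * ((real N - 2) / real N * lbar N x $ i - lbar N x $ i) \<partial>pos_space N)"
        by (rule perk(1)[OF i Bb])
    qed
  next
    fix B :: "real set" assume Bb: "B \<in> sets borel"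
    have e1: "(\<lambda>\<omega>. indicator B ((\<lambda>(x, i). lbar N x $ i) \<omega>) * ((\<lambda>(x, i). dl N T cyc x i) \<omega> - ((real N - 2) / real N * (\<lambda>(x, i). lbar N x $ i) \<omega> - (\<lambda>(x, i). lbar N x $ i) \<omega>))\<^sup>2)
       = (\<lambda>(x, i). indicator B (lbar N x $ i) * (dl N T cyc x i - ((real N - 2) / real N * lbar N x $ i - lbar N x $ i))\<^sup>2)"
      by (rule ext) (simp add: case_prod_beta)
    have e2: "(\<lambda>\<omega>. indicator B ((\<lambda>(x, i). lbar N x $ i) \<omega>) * ((real N - 2) / (real N)\<^sup>2 * (\<bar>(\<lambda>(x, i). lbar N x $ i) \<omega>\<bar> - ((\<lambda>(x, i). lbar N x $ i) \<omega>)\<^sup>2)))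
       = (\<lambda>(x, i). indicator B (lbar N x $ i) * ((real N - 2) / (real N)\<^sup>2 * (\<bar>lbar N x $ i\<bar> - (lbar N x $ i)\<^sup>2)))"
      by (rule ext) (simp add: case_prod_beta)
    show "(\<integral>\<omega>. indicator B ((\<lambda>(x, i). lbar N x $ i) \<omega>) * ((\<lambda>(x, i). dl N T cyc x i) \<omega> - ((real N - 2) / real N * (\<lambda>(x, i). lbar N x $ i) \<omega> - (\<lambda>(x, i). lbar N x $ i) \<omega>))\<^sup>2 \<partial>pos_edge_space N)
       = (\<integral>\<omega>. indicator B ((\<lambda>(x, i). lbar N x $ i) \<omega>) * ((real N - 2) / (real N)\<^sup>2 * (\<bar>(\<lambda>(x, i). lbar N x $ i) \<omega>\<bar> - ((\<lambda>(x, i). lbar N x $ i) \<omega>)\<^sup>2)) \<partial>pos_edge_space N)"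
      unfolding e1 e2
    proof (rule edge_eq[where K=4])
      fix i assume i: "i < n"
      show "(\<lambda>x. indicator B (lbar N x $ i) * (dl N T cyc x i - ((real N - 2) / real N * lbar N x $ i - lbar N x $ i))\<^sup>2) \<in> borel_measurable (pos_space N)"
        using ind_lbar_meas[OF i Bb] perk_meas(1)[OF i] perk_meas(2)[OF i] by measurable
      show "(\<lambda>x. indicator B (lbar N x $ i) * ((real N - 2) / (real N)\<^sup>2 * (\<bar>lbar N x $ i\<bar> - (lbar N x $ i)\<^sup>2))) \<in> borel_measurable (pos_space N)"
        using ind_lbar_meas[OF i Bb] perk_meas(1)[OF i] by measurable
      fix x
      have d: "\<bar>dl N T cyc x i - ((real N - 2) / real N * lbar N x $ i - lbar N x $ i)\<bar> \<le> 2"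
        using perk_meas(3)[OF i, of x] ph_bound[OF perk_meas(4)[OF i, of x]] by linarith
      have "(dl N T cyc x i - ((real N - 2) / real N * lbar N x $ i - lbar N x $ i))\<^sup>2 \<le> 2\<^sup>2"
        using d abs_le_square_iff[of "dl N T cyc x i - ((real N - 2) / real N * lbar N x $ i - lbar N x $ i)" 2] by simp
      then show "\<bar>indicator B (lbar N x $ i) * (dl N T cyc x i - ((real N - 2) / real N * lbar N x $ i - lbar N x $ i))\<^sup>2\<bar> \<le> 4"
        by (auto simp: indicator_def)
      show "\<bar>indicator B (lbar N x $ i) * ((real N - 2) / (real N)\<^sup>2 * (\<bar>lbar N x $ i\<bar> - (lbar N x $ i)\<^sup>2))\<bar> \<le> 4"
        using ps_bound[OF perk_meas(4)[OF i, of x]] by (auto simp: indicator_def)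
    next
      fix i assume i: "i < n"
      show "(\<integral>x. indicator B (lbar N x $ i) * (dl N T cyc x i - ((real N - 2) / real N * lbar N x $ i - lbar N x $ i))\<^sup>2 \<partial>pos_space N)
        = (\<integral>x. indicator B (lbar N x $ i) * ((real N - 2) / (real N)\<^sup>2 * (\<bar>lbar N x $ i\<bar> - (lbar N x $ i)\<^sup>2)) \<partial>pos_space N)"
        by (rule perk(2)[OF i Bb])
    qed
  qed
  show ?thesis using A B by blast
qed

end
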